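(* Let $n \ge 1$ and $m \ge 1$ be integers, let $\lambda > 1$ be a real number, and let the coefficients $a_\alpha$, $a$, $b$ be as in the context. Suppose that for some real number $\sigma > 1$, $$\int_1^\infty r^{(m - n)\lambda + n - 1} q(r)\, dr = \infty, \qquad \text{where } q(r) = \mathop{\rm ess\,inf}_{B_{\sigma r} \setminus B_{r/\sigma}} a^{-\lambda} b .$$ Then every solution $u$ of the inequality $$\sum_{|\alpha| = m} (-1)^m \partial^\alpha a_\alpha(x, u) \ge b(x) |u|^\lambda \quad \text{in } \mathbb{R}^n$$ is trivial, i.e. $u(x) = 0$ for almost all $x \in \mathbb{R}^n$.
   Context: For each multi-index $\alpha = (\alpha_1,\dots,\alpha_n)$ with $|\alpha| = \alpha_1 + \dots + \alpha_n = m$, $a_\alpha : \mathbb{R}^n \times \mathbb{R} \to \mathbb{R}$ is a given function, and $\partial^\alpha = \partial^{|\alpha|}/\partial x_1^{\alpha_1}\cdots\partial x_n^{\alpha_n}$. The function $b : \mathbb{R}^n \to (0,\infty)$ is measurable and positive, and there is a positive measurable function $a : \mathbb{R}^n \to (0,\infty)$ such that $|a_\alpha(x,\zeta)| \le a(x)|\zeta|$ for almost all $x \in \mathbb{R}^n$, all $\zeta \in \mathbb{R}$ and all $|\alpha| = m$. $B_r$ denotes the open ball in $\mathbb{R}^n$ of radius $r>0$ centered at the origin. A function $u$ is called a solution of the inequality if $b(x)|u|^\lambda \in L_{1,loc}(\mathbb{R}^n)$, $a_\alpha(x,u) \in L_{1,loc}(\mathbb{R}^n)$ for all $|\alpha|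 = m$, and $$\int_{\mathbb{R}^n} \sum_{|\alpha|=m} a_\alpha(x,u)\, \partial^\alpha \varphi \, dx \ge \int_{\mathbb{R}^n} b(x)|u|^\lambda \varphi\, dx$$ for every non-negative $\varphi \in C_0^\infty(\mathbb{R}^n)$. *)

theory Defs
  imports "HOL-Analysis.Analysis" "HOL-Library.Multiset"
begin

text \<open>Points of R^n are vectors real^'n with a finite index type 'n (n = CARD('n)).
  A multi-index alpha = (alpha_1,...,alpha_n) is a multiset over the coordinate indices:
  alpha_i = count alpha i and |alpha| = size alpha.\<close>

definition partial_der :: "'n::finite \<Rightarrow> (real^'n \<Rightarrow> real) \<Rightarrow> real^'n \<Rightarrow> real" where
  "partial_der i f x = deriv (\<lambda>t. f (x + t *\<^sub>R axis i 1)) 0"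

fun Dlist :: "'n::finite list \<Rightarrow> (real^'n \<Rightarrow> real) \<Rightarrow> real^'n \<Rightarrow> real" where
  "Dlist [] f = f"
| "Dlist (i # is) f = partial_der i (Dlist is f)"

text \<open>The partial derivative of multi-index alpha (order irrelevant for smooth functions).\<close>
definition Dalpha :: "'n::finite multiset \<Rightarrow> (real^'n \<Rightarrow> real) \<Rightarrow> real^'n \<Rightarrow> real" where
  "Dalpha \<alpha> f = Dlist (SOME is. mset is = \<alpha>) f"

definition smooth_fun :: "(real^'n::finite \<Rightarrow> real) \<Rightarrow> bool" where
  "smooth_fun f \<longleftrightarrow> (\<forall>is. continuous_on UNIV (Dlist is f) \<and>
       (\<forall>i x. (\<lambda>t. Dlist is f (x + t *\<^sub>R axis i 1)) differentiable (at 0)))"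

definition test_fun :: "(real^'n::finite \<Rightarrow> real) \<Rightarrow> bool" where
  "test_fun f \<longleftrightarrow> smooth_fun f \<and> compact (closure {x. f x \<noteq> 0})"

definition loc_integrable :: "(real^'n::finite \<Rightarrow> real) \<Rightarrow> bool" where
  "loc_integrable f \<longleftrightarrow> (\<forall>K. compact K \<longrightarrow> set_integrable lebesgue K f)"

text \<open>u is a (weak) solution of sum_{|alpha|=m} (-1)^m D^alpha a_alpha(x,u) >= b(x)|u|^lambda.\<close>
definition is_solution :: "nat \<Rightarrow> real \<Rightarrow> ('n::finite multiset \<Rightarrow> real^'n \<Rightarrow> real \<Rightarrow> real)
    \<Rightarrow> (real^'n \<Rightarrow> real) \<Rightarrow> (real^'n \<Rightarrow> real) \<Rightarrow> bool" where
  "is_solution m lam A b u \<longleftrightarrow>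
     loc_integrable (\<lambda>x. b x * \<bar>u x\<bar> powr lam) \<and>
     (\<forall>\<alpha>. size \<alpha> = m \<longrightarrow> loc_integrable (\<lambda>x. A \<alpha> x (u x))) \<and>
     (\<forall>\<phi>. test_fun \<phi> \<and> (\<forall>x. 0 \<le> \<phi> x) \<longrightarrow>
        (\<integral>x. (\<Sum>\<alpha>\<in>{\<alpha>. size \<alpha> = m}. A \<alpha> x (u x) * Dalpha \<alpha> \<phi> x) \<partial>lebesgue)
          \<ge> (\<integral>x. b x * \<bar>u x\<bar> powr lam * \<phi> x \<partial>lebesgue))"

definition essinf_on :: "(real^'n::finite) set \<Rightarrow> (real^'n \<Rightarrow> real) \<Rightarrow> ennreal" where
  "essinf_on S f = Sup {c. AE x in lebesgue. x \<in> S \<longrightarrow> c \<le> ennreal (f x)}"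

end

theory Submission
  imports Defs
begin


lemma exp_ge_pow_fact:
  fixes x :: real assumes "x \<ge> 0"
  shows "x ^ n / fact n \<le> exp x"
proof -
  have s: "(\<lambda>i. x^i /\<^sub>R fact i) sums exp x" by (rule exp_converges)
  have "(\<Sum>i<n. x^i /\<^sub>R fact i) \<ge> 0"
    using assms by (auto intro!: sum_nonneg)
  hence "x ^ n / fact n \<le> (\<Sum>i<Suc n. x^i /\<^sub>R fact i)"
    by (simp add: divide_inverse)
  also have "\<dots> \<le> suminf (\<lambda>i. x^i /\<^sub>R fact i)"
    by (rule sum_le_suminf) (use s assms in \<open>auto simp: sums_iff\<close>)
  also have "\<dots> = exp x" using s by (simp add: sums_iff)
  finally show ?thesis .
qed

definition ex :: "nat \<Rightarrow> real \<Rightarrow> real" where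
  "ex k t = (if t > 0 then exp (- 1 / t) / t ^ k else 0)"

lemma ex_nonneg: "ex k t \<ge> 0" by (simp add: ex_def)

lemma ex_bound: "\<bar>ex k t\<bar> \<le> fact (Suc k) * \<bar>t\<bar>"
proof (cases "t > 0")
  case True
  have "(1/t) ^ Suc k / fact (Suc k) \<le> exp (1/t)"
    using True by (intro exp_ge_pow_fact) auto
  moreover have fpos: "fact (Suc k) > (0::real)" by simp
  ultimately have "(1/t) ^ Suc k \<le> exp (1/t) * fact (Suc k)"
    by (simp only: pos_divide_le_eq[OF fpos])
  hence "(1/t) ^ Suc k * t ^ Suc k \<le> exp (1/t) * fact (Suc k) * t ^ Suc k"
    using True by (intro mult_right_mono) auto
  hence "1 \<le> exp (1/t) * fact (Suc k) * t ^ Suc k"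
    using True by (simp add: power_divide)
  hence "exp (-1/t) \<le> exp (-1/t) * (exp (1/t) * fact (Suc k) * t ^ Suc k)"
    by simp
  also have "\<dots> = fact (Suc k) * t ^ Suc k"
    by (simp add: exp_minus field_simps)
  finally have "exp (-1/t) / t ^ k \<le> fact (Suc k) * t"
    using True by (simp add: field_simps)
  thus ?thesis using True by (simp add: ex_def)
next
  case False
  have "0 \<le> fact (Suc k) * \<bar>t\<bar>" by (intro mult_nonneg_nonneg) auto
  moreover have "ex k t = 0" using False by (simp add: ex_def)
  ultimately show ?thesis by simp
qed

lemma ex_deriv: "(ex k has_real_derivative (ex (k+2) t - real k * ex (k+1) t)) (at t)"
proof -
  consider "t > 0" | "t < 0" | "t = 0" by linarith
  then show ?thesis
  proof cases
    case 1
    have ev: "\<forall>\<^sub>F y in nhds t. ex k y = exp (- 1 / y) / y ^ k"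
      using eventually_nhds_in_open[of "{0<..}" t] 1
      by (auto elim!: eventually_mono simp: ex_def)
    have "((\<lambda>y. exp (- 1 / y) / y ^ k) has_real_derivative
        (exp (-1/t) * (1/t^2) * t^k - exp (-1/t) * (real k * t^(k-1))) / (t^k)^2) (at t)"
      using 1 by (auto intro!: derivative_eq_intros simp: power2_eq_square)
    moreover have "(exp (-1/t) * (1/t^2) * t^k - exp (-1/t) * (real k * t^(k-1))) / (t^k)^2
       = ex (k+2) t - real k * ex (k+1) t"
      using 1 by (cases k) (auto simp: ex_def field_simps power2_eq_square)
    ultimately show ?thesis using DERIV_cong_ev[OF refl ev refl] by simp
  next
    case 2
    have ev: "\<forall>\<^sub>F y in nhds t. ex k y = 0"
      using eventually_nhds_in_open[of "{..<0}" t] 2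
      by (auto elim!: eventually_mono simp: ex_def)
    have "(ex k has_real_derivative 0) (at t)"
      using DERIV_cong_ev[OF refl ev refl, of 0] by simp
    moreover have "ex (k+2) t - real k * ex (k+1) t = 0" using 2 by (simp add: ex_def)
    ultimately show ?thesis by simp
  next
    case 3
    have "((\<lambda>y. (ex k y - ex k 0) / (y - 0)) \<longlongrightarrow> 0) (at 0)"
    proof (rule tendsto_sandwich[where f="\<lambda>y. - fact (Suc (Suc k)) * \<bar>y\<bar>"
                                      and h="\<lambda>y. fact (Suc (Suc k)) * \<bar>y\<bar>"])
      have b: "\<bar>(ex k y - ex k 0) / (y - 0)\<bar> \<le> fact (Suc (Suc k)) * \<bar>y\<bar>" for y
      proof (cases "y > 0")
        case True
        have "ex k y / y = ex (Suc k) y" using True by (simp add: ex_def field_simps)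
        thus ?thesis using ex_bound[of "Suc k" y] True by (simp add: ex_def mult.commute)
      next
        case False
        have "0 \<le> fact (Suc (Suc k)) * \<bar>y\<bar>" by (intro mult_nonneg_nonneg) auto
        moreover have "ex k y = 0" "ex k 0 = 0" using False by (auto simp add: ex_def)
        ultimately show ?thesis by simp
      qed
      show "\<forall>\<^sub>F y in at 0. - fact (Suc (Suc k)) * \<bar>y\<bar> \<le> (ex k y - ex k 0) / (y - 0)"
        using b by (intro always_eventually allI) (metis abs_le_D2 minus_le_iff mult_minus_left)
      show "\<forall>\<^sub>F y in at 0. (ex k y - ex k 0) / (y - 0) \<le> fact (Suc (Suc k)) * \<bar>y\<bar>"
        using b by (intro always_eventually allI) (metis abs_le_D1)
      show "((\<lambda>y::real. - fact (Suc (Suc k)) * \<bar>y\<bar>) \<longlongrightarrow> 0) (at 0)"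
        by (auto intro!: tendsto_eq_intros)
      show "((\<lambda>y::real. fact (Suc (Suc k)) * \<bar>y\<bar>) \<longlongrightarrow> 0) (at 0)"
        by (auto intro!: tendsto_eq_intros)
    qed
    thus ?thesis using 3 by (simp add: has_field_derivative_iff ex_def)
  qed
qed



inductive_set A1 :: "real \<Rightarrow> (real \<Rightarrow> real) set" for s where
  A1_const: "(\<lambda>t. c) \<in> A1 s"
| A1_exl: "(\<lambda>t. ex k (s - t)) \<in> A1 s"
| A1_exr: "(\<lambda>t. ex k (t - 1)) \<in> A1 s"
| A1_inv: "(\<lambda>t. inverse (ex 0 (s - t) + ex 0 (t - 1))) \<in> A1 s"
| A1_add: "f \<in> A1 s \<Longrightarrow> g \<in> A1 s \<Longrightarrow> (\<lambda>t. f t + g t) \<in> A1 s"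
| A1_mult: "f \<in> A1 s \<Longrightarrow> g \<in> A1 s \<Longrightarrow> (\<lambda>t. f t * g t) \<in> A1 s"

lemma A1_diff: "f \<in> A1 s \<Longrightarrow> g \<in> A1 s \<Longrightarrow> (\<lambda>t. f t - g t) \<in> A1 s"
proof -
  assume "f \<in> A1 s" "g \<in> A1 s"
  hence "(\<lambda>t. f t + (-1) * g t) \<in> A1 s" by (intro A1_add A1_mult A1_const)
  thus ?thesis by simp
qed

lemma ex_pos_sum: "s > 1 \<Longrightarrow> ex 0 (s - t) + ex 0 (t - 1) > 0"
  by (cases "t < s") (auto simp: ex_def add_pos_nonneg add_nonneg_pos)

lemma A1_deriv:
  assumes "s > 1" "f \<in> A1 s"
  shows "\<exists>f'\<in>A1 s. \<forall>t. (f has_real_derivative f' t) (at t)"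
  using assms(2)
proof induction
  case (A1_const c)
  show ?case by (intro bexI[of _ "\<lambda>t. 0"]) (auto intro: A1.intros)
next
  case (A1_exl k)
  have "((\<lambda>t. ex k (s - t)) has_real_derivative
      (ex (k+2) (s - t) - real k * ex (k+1) (s - t)) * (-1)) (at t)" for t
    by (rule DERIV_chain2[OF ex_deriv]) (auto intro!: derivative_eq_intros)
  moreover have "(\<lambda>t. (ex (k+2) (s - t) - real k * ex (k+1) (s - t)) * (-1)) \<in> A1 s"
    by (intro A1_mult A1_diff A1.intros)
  ultimately show ?case
    by (intro bexI[of _ "\<lambda>t. (ex (k+2) (s - t) - real k * ex (k+1) (s - t)) * (-1)"]) auto
next
  case (A1_exr k)
  have "((\<lambda>t. ex k (t - 1)) has_real_derivative
      (ex (k+2) (t - 1) - real k * ex (k+1) (t - 1)) * 1) (at t)" for t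
    by (rule DERIV_chain2[OF ex_deriv]) (auto intro!: derivative_eq_intros)
  moreover have "(\<lambda>t. (ex (k+2) (t - 1) - real k * ex (k+1) (t - 1)) * 1) \<in> A1 s"
    by (intro A1_mult A1_diff A1.intros)
  ultimately show ?case
    by (intro bexI[of _ "\<lambda>t. (ex (k+2) (t - 1) - real k * ex (k+1) (t - 1)) * 1"]) auto
next
  case A1_inv
  define D where "D t = ex 2 (s - t) * (-1) + ex 2 (t - 1) * 1" for t
  have e0: "(ex 0 has_real_derivative ex 2 t) (at t)" for t
    using ex_deriv[of 0 t] by (simp add: numeral_2_eq_2)
  have d: "((\<lambda>t. ex 0 (s - t) + ex 0 (t - 1)) has_real_derivative D t) (at t)" for t
    unfolding D_def
    by (intro DERIV_add DERIV_chain2[OF e0]; auto intro!: derivative_eq_intros)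
  have "((\<lambda>t. inverse (ex 0 (s - t) + ex 0 (t - 1))) has_real_derivative
     - (inverse (ex 0 (s - t) + ex 0 (t - 1)) * D t * inverse (ex 0 (s - t) + ex 0 (t - 1)))) (at t)" for t
    using ex_pos_sum[OF assms(1), of t]
    by (intro DERIV_inverse' d) auto
  moreover have "(\<lambda>t. (-1) * (D t * (inverse (ex 0 (s - t) + ex 0 (t - 1))
                          * inverse (ex 0 (s - t) + ex 0 (t - 1))))) \<in> A1 s"
    unfolding D_def by (intro A1_mult A1_add A1_diff A1.intros)
  ultimately show ?case
    by (intro bexI[of _ "\<lambda>t. (-1) * (D t * (inverse (ex 0 (s - t) + ex 0 (t - 1))
                          * inverse (ex 0 (s - t) + ex 0 (t - 1))))"])
       (auto simp: algebra_simps)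
next
  case (A1_add f g)
  then obtain f' g' where "f' \<in> A1 s" "g' \<in> A1 s"
    "\<forall>t. (f has_real_derivative f' t) (at t)" "\<forall>t. (g has_real_derivative g' t) (at t)"
    by blast
  thus ?case by (intro bexI[of _ "\<lambda>t. f' t + g' t"]) (auto intro: A1.intros DERIV_add)
next
  case (A1_mult f g)
  then obtain f' g' where "f' \<in> A1 s" "g' \<in> A1 s"
    "\<forall>t. (f has_real_derivative f' t) (at t)" "\<forall>t. (g has_real_derivative g' t) (at t)"
    by blast
  thus ?case using A1_mult.hyps
    by (intro bexI[of _ "\<lambda>t. f' t * g t + g' t * f t"])
      (auto intro!: A1.intros(5,6) DERIV_mult)
qed

lemma A1_cont: "s > 1 \<Longrightarrow> f \<in> A1 s \<Longrightarrow> continuous_on UNIV f"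
  using A1_deriv[of s f]
  by (metis DERIV_isCont continuous_at_imp_continuous_on)



inductive_set An :: "real \<Rightarrow> (real^'n::finite \<Rightarrow> real) set" for s where
  An_const: "(\<lambda>x. c) \<in> An s"
| An_coord: "(\<lambda>x. x $ i) \<in> An s"
| An_rad: "h \<in> A1 s \<Longrightarrow> (\<lambda>x. h (norm x ^ 2)) \<in> An s"
| An_add: "F \<in> An s \<Longrightarrow> G \<in> An s \<Longrightarrow> (\<lambda>x. F x + G x) \<in> An s"
| An_mult: "F \<in> An s \<Longrightarrow> G \<in> An s \<Longrightarrow> (\<lambda>x. F x * G x) \<in> An s"

lemma norm_line_sq:
  fixes x :: "real^'n::finite"
  shows "norm (x + t *\<^sub>R axis i 1) ^ 2 = norm x ^ 2 + 2 * t * x $ i + t ^ 2"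
proof -
  have "norm (x + t *\<^sub>R axis i 1) ^ 2 = (x + t *\<^sub>R axis i 1) \<bullet> (x + t *\<^sub>R axis i 1)"
    by (rule power2_norm_eq_inner)
  also have "\<dots> = x \<bullet> x + 2 * t * x $ i + t ^ 2"
    by (simp add: inner_add_left inner_add_right inner_axis inner_axis' inner_axis_axis
        algebra_simps power2_eq_square)
  finally show ?thesis by (simp add: power2_norm_eq_inner)
qed

lemma line_deriv_norm_sq:
  fixes x :: "real^'n::finite"
  shows "((\<lambda>t. norm (x + t *\<^sub>R axis i 1) ^ 2) has_real_derivative 2 * x $ i) (at 0)"
proof -
  have "((\<lambda>t. norm x ^ 2 + 2 * t * x $ i + t ^ 2) has_real_derivative 2 * x $ i) (at 0)"
    by (auto intro!: derivative_eq_intros)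
  thus ?thesis by (simp add: norm_line_sq)
qed

lemma An_line:
  fixes F :: "real^'n::finite \<Rightarrow> real"
  assumes "s > 1" "F \<in> An s"
  shows "continuous_on UNIV F \<and>
    (\<forall>i. \<exists>F'\<in>An s. \<forall>x. ((\<lambda>t. F (x + t *\<^sub>R axis i 1)) has_real_derivative F' x) (at 0))"
  using assms(2)
proof induction
  case (An_const c)
  show ?case by (auto intro!: bexI[of _ "\<lambda>x. 0"] An.intros)
next
  case (An_coord j)
  have "continuous_on UNIV (\<lambda>x::real^'n. x $ j)" by (intro continuous_intros)
  moreover have "\<exists>F'\<in>An s. \<forall>x::real^'n. ((\<lambda>t. (x + t *\<^sub>R axis i 1) $ j) has_real_derivative F' x) (at 0)" for i
  proof (intro bexI[of _ "\<lambda>x. (if j = i then 1 else 0)"] allI)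
    fix x :: "real^'n"
    have "((\<lambda>t. x $ j + t * (if j = i then 1 else 0)) has_real_derivative (if j = i then 1 else 0)) (at 0)"
      by (auto intro!: derivative_eq_intros)
    thus "((\<lambda>t. (x + t *\<^sub>R axis i 1) $ j) has_real_derivative (if j = i then 1 else 0)) (at 0)"
      by (simp add: axis_def)
  qed (rule An.intros)
  ultimately show ?case by blast
next
  case (An_rad h)
  obtain h' where h': "h' \<in> A1 s" "\<And>t. (h has_real_derivative h' t) (at t)"
    using A1_deriv[OF assms(1) An_rad] by blast
  have "continuous_on UNIV h" using A1_cont[OF assms(1) An_rad] .
  hence "continuous_on UNIV (\<lambda>x::real^'n. h (norm x ^ 2))"
    by (rule continuous_on_compose2) (auto intro!: continuous_intros)
  moreover have "\<exists>F'\<in>An s. \<forall>x::real^'n. ((\<lambda>t. h (norm (x + t *\<^sub>R axis i 1) ^ 2)) has_real_derivative F' x) (at 0)" for i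
  proof (intro bexI[of _ "\<lambda>x. h' (norm x ^ 2) * (2 * x $ i)"] allI)
    fix x :: "real^'n"
    show "((\<lambda>t. h (norm (x + t *\<^sub>R axis i 1) ^ 2)) has_real_derivative h' (norm x ^ 2) * (2 * x $ i)) (at 0)"
      using DERIV_chain2[OF h'(2) line_deriv_norm_sq, of x i] by simp
  qed (intro An.intros h'(1))
  ultimately show ?case by blast
next
  case (An_add F G)
  have c: "continuous_on UNIV (\<lambda>x. F x + G x)" using An_add.IH by (auto intro!: continuous_intros)
  have "\<exists>H\<in>An s. \<forall>x. ((\<lambda>t. F (x + t *\<^sub>R axis i 1) + G (x + t *\<^sub>R axis i 1)) has_real_derivative H x) (at 0)" for i
  proof -
    obtain F' G' where "F' \<in> An s" "G' \<in> An s"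
      "\<forall>x. ((\<lambda>t. F (x + t *\<^sub>R axis i 1)) has_real_derivative F' x) (at 0)"
      "\<forall>x. ((\<lambda>t. G (x + t *\<^sub>R axis i 1)) has_real_derivative G' x) (at 0)"
      using An_add.IH by blast
    thus ?thesis by (intro bexI[of _ "\<lambda>x. F' x + G' x"]) (auto intro!: An.intros(4) DERIV_add)
  qed
  with c show ?case by blast
next
  case (An_mult F G)
  have c: "continuous_on UNIV (\<lambda>x. F x * G x)" using An_mult.IH by (auto intro!: continuous_intros)
  have "\<exists>H\<in>An s. \<forall>x. ((\<lambda>t. F (x + t *\<^sub>R axis i 1) * G (x + t *\<^sub>R axis i 1)) has_real_derivative H x) (at 0)" for i
  proof -
    obtain F' G' where "F' \<in> An s" "G' \<in> An s"
      "\<forall>x. ((\<lambda>t. F (x + t *\<^sub>R axis i 1)) has_real_derivative F' x) (at 0)"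
      "\<forall>x. ((\<lambda>t. G (x + t *\<^sub>R axis i 1)) has_real_derivative G' x) (at 0)"
      using An_mult.IH by blast
    note d = this
    show ?thesis using An_mult.hyps d(1,2)
    proof (intro bexI[of _ "\<lambda>x. F' x * G x + G' x * F x"] allI)
      fix x
      have "((\<lambda>t. F (x + t *\<^sub>R axis i 1) * G (x + t *\<^sub>R axis i 1)) has_real_derivative
         F' x * G (x + 0 *\<^sub>R axis i 1) + G' x * F (x + 0 *\<^sub>R axis i 1)) (at 0)"
        using d(3,4) by (intro DERIV_mult) auto
      thus "((\<lambda>t. F (x + t *\<^sub>R axis i 1) * G (x + t *\<^sub>R axis i 1)) has_real_derivative
         F' x * G x + G' x * F x) (at 0)" by simp
    qed (auto intro!: An.intros(4,5))
  qed
  with c show ?case by blast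
qed

lemma An_partial:
  assumes "s > 1" "F \<in> An s"
  shows "partial_der i F \<in> An s"
    and "\<And>x. ((\<lambda>t. F (x + t *\<^sub>R axis i 1)) has_real_derivative partial_der i F x) (at 0)"
proof -
  obtain F' where F': "F' \<in> An s" "\<And>x. ((\<lambda>t. F (x + t *\<^sub>R axis i 1)) has_real_derivative F' x) (at 0)"
    using An_line[OF assms] by blast
  have "partial_der i F = F'"
    using F'(2) by (auto simp: fun_eq_iff partial_der_def intro!: DERIV_imp_deriv)
  thus "partial_der i F \<in> An s" "\<And>x. ((\<lambda>t. F (x + t *\<^sub>R axis i 1)) has_real_derivative partial_der i F x) (at 0)"
    using F' by auto
qed

lemma An_Dlist: "s > 1 \<Longrightarrow> F \<in> An s \<Longrightarrow> Dlist is F \<in> An s"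
  by (induction "is") (auto intro: An_partial)

lemma An_smooth: "s > 1 \<Longrightarrow> F \<in> An s \<Longrightarrow> smooth_fun F"
  unfolding smooth_fun_def
proof (intro allI conjI)
  fix "is" i x
  assume s: "s > 1" and F: "F \<in> An s"
  have D: "Dlist is F \<in> An s" using An_Dlist[OF s F] .
  show "continuous_on UNIV (Dlist is F)" using An_line[OF s D] by blast
  show "(\<lambda>t. Dlist is F (x + t *\<^sub>R axis i 1)) differentiable at 0"
    using An_partial(2)[OF s D] by (meson has_field_derivative_imp_has_derivative differentiableI)
qed



lemma Dlist_const_open:
  fixes F :: "real^'n::finite \<Rightarrow> real"
  assumes U: "open U" and c: "\<And>y. y \<in> U \<Longrightarrow> F y = c"
  shows "y \<in> U \<Longrightarrow> Dlist is F y = (if is = [] then c else 0)"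
proof (induction "is" arbitrary: y)
  case Nil thus ?case using c by simp
next
  case (Cons i "is")
  obtain e where e: "e > 0" "ball y e \<subseteq> U" using U Cons.prems openE by blast
  have ev: "\<forall>\<^sub>F t in nhds 0. Dlist is F (y + t *\<^sub>R axis i 1) = (if is = [] then c else 0)"
    unfolding eventually_nhds_metric
  proof (intro exI[of _ e] conjI allI impI)
    fix t :: real assume "dist t 0 < e"
    hence "y + t *\<^sub>R axis i 1 \<in> ball y e" by (simp add: dist_norm)
    thus "Dlist is F (y + t *\<^sub>R axis i 1) = (if is = [] then c else 0)"
      using e Cons.IH by blast
  qed (use e in auto)
  have "((\<lambda>t. Dlist is F (y + t *\<^sub>R axis i 1)) has_real_derivative 0) (at 0)"
    using DERIV_cong_ev[OF refl ev refl] by simp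
  thus ?case by (simp add: partial_der_def DERIV_imp_deriv)
qed

lemma A1_pow: "f \<in> A1 s \<Longrightarrow> (\<lambda>t. f t ^ j) \<in> A1 s"
  by (induction j) (auto intro: A1.intros)

lemma An_pow: "F \<in> An s \<Longrightarrow> (\<lambda>x. F x ^ j) \<in> An s"
  by (induction j) (auto intro: An.intros)

definition gg :: "real \<Rightarrow> real \<Rightarrow> real" where
  "gg s t = ex 0 (s - t) * inverse (ex 0 (s - t) + ex 0 (t - 1))"

lemma gg_A1: "gg s \<in> A1 s"
proof -
  have "(\<lambda>t. ex 0 (s - t) * inverse (ex 0 (s - t) + ex 0 (t - 1))) \<in> A1 s"
    by (intro A1.intros)
  thus ?thesis by (simp add: gg_def[abs_def])
qed

lemma gg_props:
  assumes "s > 1"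
  shows "0 \<le> gg s t" "gg s t \<le> 1" "t \<le> 1 \<Longrightarrow> gg s t = 1" "t \<ge> s \<Longrightarrow> gg s t = 0"
proof -
  have p: "ex 0 (s - t) + ex 0 (t - 1) > 0" using ex_pos_sum[OF assms] .
  show "0 \<le> gg s t" using p by (simp add: gg_def ex_nonneg)
  show "gg s t \<le> 1" using p ex_nonneg[of 0 "t - 1"]
    by (simp add: gg_def field_simps)
  show "t \<le> 1 \<Longrightarrow> gg s t = 1" using p by (simp add: gg_def ex_def)
  show "t \<ge> s \<Longrightarrow> gg s t = 0" by (simp add: gg_def ex_def)
qed

definition Psi :: "real \<Rightarrow> real^'n::finite \<Rightarrow> real" where
  "Psi s x = gg s (norm x ^ 2)"

lemma Psi_An: "Psi s \<in> An s"
  unfolding Psi_def[abs_def] by (intro An.intros gg_A1)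

lemma Psi_props:
  fixes x :: "real^'n::finite"
  assumes "s > 1"
  shows "0 \<le> Psi s x" "Psi s x \<le> 1" "norm x \<le> 1 \<Longrightarrow> Psi s x = 1"
    "norm x \<ge> sqrt s \<Longrightarrow> Psi s x = 0"
proof -
  show "0 \<le> Psi s x" "Psi s x \<le> 1" using gg_props[OF assms] by (auto simp: Psi_def)
  show "norm x \<le> 1 \<Longrightarrow> Psi s x = 1"
    using gg_props(3)[OF assms] by (simp add: Psi_def power_le_one)
  assume "norm x \<ge> sqrt s"
  hence "(sqrt s)^2 \<le> norm x ^ 2" using assms by (intro power_mono) auto
  thus "Psi s x = 0" using gg_props(4)[OF assms] assms by (simp add: Psi_def less_imp_le)
qed

lemma Dlist_Psi_pow:
  fixes "is" :: "'n::finite list"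
  assumes s: "s > 1" and len: "length is \<le> k"
  shows "\<exists>P\<in>An s. \<forall>x. Dlist is (\<lambda>x. Psi s x ^ k) x = Psi s x ^ (k - length is) * P x"
  using len
proof (induction "is")
  case Nil
  show ?case by (intro bexI[of _ "\<lambda>x. 1"]) (auto intro: An.intros)
next
  case (Cons i "is")
  then obtain P where P: "P \<in> An s" "\<And>x. Dlist is (\<lambda>x. Psi s x ^ k) x = Psi s x ^ (k - length is) * P x"
    by auto
  define j where "j = k - length is"
  have j: "j \<ge> 1" "k - length (i # is) = j - 1" using Cons.prems by (auto simp: j_def)
  have eq: "Dlist is (\<lambda>x. Psi s x ^ k) = (\<lambda>x. Psi s x ^ j * P x)"
    using P(2) by (auto simp: j_def)
  define Q where "Q x = real j * partial_der i (Psi s) x * P x + partial_der i P x * Psi s x" for x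
  have Q: "Q \<in> An s" unfolding Q_def[abs_def]
    using An_add[OF An_mult[OF An_mult[OF An_const An_partial(1)[OF s Psi_An]] P(1)]
                   An_mult[OF An_partial(1)[OF s P(1)] Psi_An]] by simp
  have "Dlist (i # is) (\<lambda>x. Psi s x ^ k) x = Psi s x ^ (j - 1) * Q x" for x
  proof -
    have d1: "((\<lambda>t. Psi s (x + t *\<^sub>R axis i 1)) has_real_derivative partial_der i (Psi s) x) (at 0)"
      by (rule An_partial(2)[OF s Psi_An])
    have d2: "((\<lambda>t. P (x + t *\<^sub>R axis i 1)) has_real_derivative partial_der i P x) (at 0)"
      by (rule An_partial(2)[OF s P(1)])
    have "((\<lambda>t. Psi s (x + t *\<^sub>R axis i 1) ^ j * P (x + t *\<^sub>R axis i 1)) has_real_derivative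
       (of_nat j * (partial_der i (Psi s) x * Psi s (x + 0 *\<^sub>R axis i 1) ^ (j - Suc 0)))
          * P (x + 0 *\<^sub>R axis i 1) + partial_der i P x * Psi s (x + 0 *\<^sub>R axis i 1) ^ j) (at 0)"
      by (intro DERIV_mult DERIV_power d1 d2)
    moreover have "(of_nat j * (partial_der i (Psi s) x * Psi s (x + 0 *\<^sub>R axis i 1) ^ (j - Suc 0)))
          * P (x + 0 *\<^sub>R axis i 1) + partial_der i P x * Psi s (x + 0 *\<^sub>R axis i 1) ^ j
        = Psi s x ^ (j - 1) * Q x"
    proof -
      have "Psi s x ^ j = Psi s x ^ (j - 1) * Psi s x" using j(1)
        by (metis One_nat_def Suc_pred less_le_trans zero_less_one power_Suc2)
      thus ?thesis by (simp add: Q_def algebra_simps)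
    qed
    ultimately have "((\<lambda>t. Psi s (x + t *\<^sub>R axis i 1) ^ j * P (x + t *\<^sub>R axis i 1)) has_real_derivative
       Psi s x ^ (j - 1) * Q x) (at 0)" by simp
    thus ?thesis by (simp add: eq partial_der_def DERIV_imp_deriv)
  qed
  thus ?case using Q j by auto
qed



lemma Dalpha_eq: "size \<alpha> = m \<Longrightarrow> \<exists>is. length is = m \<and> Dalpha \<alpha> f = Dlist is f"
proof -
  assume "size \<alpha> = m"
  have "mset (SOME is. mset is = \<alpha>) = \<alpha>" by (rule someI_ex) (rule ex_mset)
  hence "length (SOME is. mset is = \<alpha>) = m" using \<open>size \<alpha> = m\<close>
    by (metis size_mset)
  thus ?thesis by (auto simp: Dalpha_def)
qed

lemma Phi_exists:
  fixes s lam :: real and m :: nat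
  assumes s: "s > 1" and lam: "lam > 1" and m: "m \<ge> 1"
  shows "\<exists>(\<Phi>::real^'n::finite \<Rightarrow> real) M. test_fun \<Phi> \<and> (\<forall>y. 0 \<le> \<Phi> y \<and> \<Phi> y \<le> 1)
     \<and> (\<forall>y. norm y \<le> 1 \<longrightarrow> \<Phi> y = 1) \<and> (\<forall>y. norm y \<ge> sqrt s \<longrightarrow> \<Phi> y = 0) \<and> M \<ge> 0
     \<and> (\<forall>y. (\<Sum>\<alpha>\<in>{\<alpha>. size \<alpha> = m}. \<bar>Dalpha \<alpha> \<Phi> y\<bar>)
            \<le> M * \<Phi> y powr (1/lam) * indicator {y. 1 \<le> norm y \<and> norm y \<le> sqrt s} y)"
proof -
  define k where "k = nat \<lceil>real m * lam / (lam - 1)\<rceil> + 1"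
  have kge: "real k \<ge> real m * lam / (lam - 1) + 0" unfolding k_def by linarith
  have "real m * lam / (lam - 1) \<ge> real m"
    using lam by (simp add: field_simps)
  hence km: "k > m" using kge unfolding k_def by linarith
  have kexp: "real k / lam \<le> real (k - m)"
  proof -
    have "real k * (lam - 1) \<ge> real m * lam" using kge lam by (simp add: field_simps)
    hence "real k \<le> real (k - m) * lam" using km by (simp add: of_nat_diff algebra_simps)
    thus ?thesis using lam by (simp add: field_simps)
  qed
  define \<Psi> where "\<Psi> = (Psi s :: real^'n \<Rightarrow> real)"
  define \<Phi> where "\<Phi> = (\<lambda>x. \<Psi> x ^ k)"
  have PsiA: "\<Psi> \<in> An s" unfolding \<Psi>_def by (rule Psi_An)
  have PhiA: "\<Phi> \<in> An s" unfolding \<Phi>_def by (rule An_pow[OF PsiA])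
  have Pp: "0 \<le> \<Psi> y" "\<Psi> y \<le> 1" "norm y \<le> 1 \<Longrightarrow> \<Psi> y = 1" "norm y \<ge> sqrt s \<Longrightarrow> \<Psi> y = 0" for y
    using Psi_props[OF s, of y] by (auto simp: \<Psi>_def)
  have Php: "0 \<le> \<Phi> y" "\<Phi> y \<le> 1" "norm y \<le> 1 \<Longrightarrow> \<Phi> y = 1" "norm y \<ge> sqrt s \<Longrightarrow> \<Phi> y = 0" for y
    using Pp[of y] km by (auto simp: \<Phi>_def power_le_one)
  have smooth: "smooth_fun \<Phi>" by (rule An_smooth[OF s PhiA])
  have "{x. \<Phi> x \<noteq> 0} \<subseteq> cball 0 (sqrt s)" using Php(4) by (force simp: not_le)
  hence "bounded {x. \<Phi> x \<noteq> 0}" by (rule bounded_subset[OF bounded_cball])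
  hence test: "test_fun \<Phi>" using smooth by (simp add: test_fun_def compact_closure)
  have Dbound: "\<exists>C\<ge>0. \<forall>y. \<bar>Dlist is \<Phi> y\<bar> \<le> C * \<Phi> y powr (1/lam)" if len: "length is = m" for "is"
  proof -
    obtain P where P: "P \<in> An s" "\<And>x. Dlist is \<Phi> x = \<Psi> x ^ (k - m) * P x"
      using Dlist_Psi_pow[OF s, of "is" k] len km unfolding \<Phi>_def \<Psi>_def by auto
    have "continuous_on UNIV P" using An_line[OF s P(1)] by blast
    hence "compact (P ` cball 0 (sqrt s))"
      by (intro compact_continuous_image) (auto intro: continuous_on_subset)
    then obtain C where C: "\<And>y. y \<in> cball 0 (sqrt s) \<Longrightarrow> \<bar>P y\<bar> \<le> C"
      using compact_imp_bounded bounded_iff by (metis image_eqI real_norm_def)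
    show ?thesis
    proof (intro exI[of _ "max C 0"] conjI allI)
      fix y
      have pow: "\<Psi> y ^ (k - m) \<le> \<Phi> y powr (1/lam)"
      proof (cases "\<Psi> y = 0")
        case True
        have "k - m > 0" "k > 0" using km by auto
        thus ?thesis using True by (simp add: \<Phi>_def zero_power)
      next
        case False
        hence pos: "\<Psi> y > 0" using Pp(1)[of y] by simp
        have "\<Phi> y powr (1/lam) = \<Psi> y powr (real k / lam)"
          using pos by (simp add: \<Phi>_def powr_realpow[symmetric] powr_powr)
        moreover have "\<Psi> y ^ (k - m) = \<Psi> y powr real (k - m)"
          using pos by (simp add: powr_realpow)
        moreover have "\<Psi> y powr real (k - m) \<le> \<Psi> y powr (real k / lam)"
          using kexp Pp[of y] by (intro powr_mono') auto
        ultimately show ?thesis by simp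
      qed
      show "\<bar>Dlist is \<Phi> y\<bar> \<le> max C 0 * \<Phi> y powr (1 / lam)"
      proof (cases "y \<in> cball 0 (sqrt s)")
        case True
        have "\<bar>Dlist is \<Phi> y\<bar> = \<Psi> y ^ (k - m) * \<bar>P y\<bar>" using P(2) Pp(1)[of y] by (simp add: abs_mult)
        also have "\<dots> \<le> \<Phi> y powr (1/lam) * max C 0"
          using pow C[OF True] Pp(1)[of y] by (intro mult_mono) auto
        finally show ?thesis by (simp add: mult.commute)
      next
        case False
        hence "\<Psi> y = 0" using Pp(4)[of y] by simp
        moreover have "k - m > 0" using km by auto
        ultimately have "Dlist is \<Phi> y = 0" using P(2)[of y] by (simp add: zero_power)
        moreover have "0 \<le> max C 0 * \<Phi> y powr (1 / lam)" by simp
        ultimately show ?thesis by simp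
      qed
    qed simp
  qed
  have Dzero: "Dlist is \<Phi> y = 0" if len: "length is = m" and y: "y \<notin> {y. 1 \<le> norm y \<and> norm y \<le> sqrt s}" for "is" y
  proof -
    have ne: "is \<noteq> []" using len m by auto
    consider "norm y < 1" | "norm y > sqrt s" using y by force
    thus ?thesis
    proof cases
      case 1
      have "Dlist is \<Phi> y = (if is = [] then 1 else 0)"
        by (rule Dlist_const_open[of "ball 0 1"]) (use 1 Php(3) in auto)
      thus ?thesis using ne by simp
    next
      case 2
      have "Dlist is \<Phi> y = (if is = [] then 0 else 0)"
        by (rule Dlist_const_open[of "{y. norm y > sqrt s}"])
           (use 2 Php(4) in \<open>auto intro: open_Collect_less continuous_intros\<close>)
      thus ?thesis by simp
    qed
  qed
  have DA: "\<exists>C\<ge>0. \<forall>y. \<bar>Dalpha \<alpha> \<Phi> y\<bar> \<le> C * \<Phi> y powr (1/lam) * indicator {y. 1 \<le> norm y \<and> norm y \<le> sqrt s} y"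
    if aS: "\<alpha> \<in> {\<alpha>. size \<alpha> = m}" for \<alpha>
  proof -
    obtain "is" where isd: "length is = m" "Dalpha \<alpha> \<Phi> = Dlist is \<Phi>"
      using Dalpha_eq[of \<alpha> m \<Phi>] aS by auto
    obtain C where C: "C \<ge> 0" "\<And>y. \<bar>Dlist is \<Phi> y\<bar> \<le> C * \<Phi> y powr (1/lam)"
      using Dbound[OF isd(1)] by blast
    show ?thesis
    proof (intro exI[of _ C] conjI allI)
      fix y
      show "\<bar>Dalpha \<alpha> \<Phi> y\<bar> \<le> C * \<Phi> y powr (1/lam) * indicator {y. 1 \<le> norm y \<and> norm y \<le> sqrt s} y"
      proof (cases "y \<in> {y. 1 \<le> norm y \<and> norm y \<le> sqrt s}")
        case True thus ?thesis using C(2)[of y] by (simp add: isd(2))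
      next
        case False thus ?thesis using Dzero[OF isd(1) False] by (simp add: isd(2))
      qed
    qed (rule C(1))
  qed
  define Cf where "Cf \<alpha> = (SOME C. C \<ge> 0 \<and> (\<forall>y. \<bar>Dalpha \<alpha> \<Phi> y\<bar> \<le> C * \<Phi> y powr (1/lam) * indicator {y. 1 \<le> norm y \<and> norm y \<le> sqrt s} y))" for \<alpha>
  have Cf: "Cf \<alpha> \<ge> 0 \<and> (\<forall>y. \<bar>Dalpha \<alpha> \<Phi> y\<bar> \<le> Cf \<alpha> * \<Phi> y powr (1/lam) * indicator {y. 1 \<le> norm y \<and> norm y \<le> sqrt s} y)"
    if aS: "\<alpha> \<in> {\<alpha>. size \<alpha> = m}" for \<alpha>
    unfolding Cf_def by (rule someI_ex[OF DA[OF aS]])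
  define M where "M = (\<Sum>\<alpha>\<in>{\<alpha>. size \<alpha> = m}. Cf \<alpha>)"
  have M0: "M \<ge> 0" unfolding M_def using Cf by (intro sum_nonneg) auto
  have sumb: "(\<Sum>\<alpha>\<in>{\<alpha>. size \<alpha> = m}. \<bar>Dalpha \<alpha> \<Phi> y\<bar>)
            \<le> M * \<Phi> y powr (1/lam) * indicator {y. 1 \<le> norm y \<and> norm y \<le> sqrt s} y" for y
  proof -
    have "(\<Sum>\<alpha>\<in>{\<alpha>. size \<alpha> = m}. \<bar>Dalpha \<alpha> \<Phi> y\<bar>) \<le>
       (\<Sum>\<alpha>\<in>{\<alpha>. size \<alpha> = m}. Cf \<alpha> * \<Phi> y powr (1/lam) * indicator {y. 1 \<le> norm y \<and> norm y \<le> sqrt s} y)"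
      using Cf by (intro sum_mono) auto
    also have "\<dots> = M * \<Phi> y powr (1/lam) * indicator {y. 1 \<le> norm y \<and> norm y \<le> sqrt s} y"
      by (simp add: M_def sum_distrib_right)
    finally show ?thesis .
  qed
  show ?thesis using test Php M0 sumb by blast
qed



lemma smooth_line_deriv:
  assumes "smooth_fun F"
  shows "((\<lambda>t. Dlist is F (y + t *\<^sub>R axis i 1)) has_real_derivative partial_der i (Dlist is F) y) (at 0)"
proof -
  have "(\<lambda>t. Dlist is F (y + t *\<^sub>R axis i 1)) differentiable at 0"
    using assms by (simp add: smooth_fun_def)
  thus ?thesis unfolding partial_der_def by (simp add: DERIV_deriv_iff_real_differentiable)
qed

lemma Dlist_scale:
  fixes F :: "real^'n::finite \<Rightarrow> real"
  assumes F: "smooth_fun F"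
  shows "Dlist is (\<lambda>x. F (c *\<^sub>R x)) x = c ^ length is * Dlist is F (c *\<^sub>R x)"
proof (induction "is" arbitrary: x)
  case Nil thus ?case by simp
next
  case (Cons i "is")
  have e: "Dlist is (\<lambda>x. F (c *\<^sub>R x)) = (\<lambda>x. c ^ length is * Dlist is F (c *\<^sub>R x))"
    using Cons.IH by auto
  have d0: "((\<lambda>t. Dlist is F (c *\<^sub>R x + t *\<^sub>R axis i 1)) has_real_derivative
       partial_der i (Dlist is F) (c *\<^sub>R x)) (at (c * 0))"
    using smooth_line_deriv[OF F, of "is" "c *\<^sub>R x" i] by simp
  have "((\<lambda>t. c ^ length is * Dlist is F (c *\<^sub>R x + (c * t) *\<^sub>R axis i 1)) has_real_derivative
      c ^ length is * (partial_der i (Dlist is F) (c *\<^sub>R x) * c)) (at 0)"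
    by (intro DERIV_cmult DERIV_chain2[where g="\<lambda>t. c * t" and x=0, OF d0]) (auto intro!: derivative_eq_intros)
  moreover have "(\<lambda>t. c ^ length is * Dlist is F (c *\<^sub>R x + (c * t) *\<^sub>R axis i 1))
      = (\<lambda>t. c ^ length is * Dlist is F (c *\<^sub>R (x + t *\<^sub>R axis i 1)))"
    by (simp add: scaleR_add_right)
  ultimately have "((\<lambda>t. Dlist is (\<lambda>x. F (c *\<^sub>R x)) (x + t *\<^sub>R axis i 1)) has_real_derivative
      c ^ Suc (length is) * partial_der i (Dlist is F) (c *\<^sub>R x)) (at 0)"
    by (simp add: e algebra_simps)
  thus ?case by (simp add: partial_der_def DERIV_imp_deriv)
qed

lemma smooth_scale:
  fixes F :: "real^'n::finite \<Rightarrow> real"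
  assumes F: "smooth_fun F"
  shows "smooth_fun (\<lambda>x. F (c *\<^sub>R x))"
  unfolding smooth_fun_def
proof (intro allI conjI)
  fix "is" i x
  have e: "Dlist is (\<lambda>x. F (c *\<^sub>R x)) = (\<lambda>x. c ^ length is * Dlist is F (c *\<^sub>R x))"
    using Dlist_scale[OF F] by auto
  have "continuous_on UNIV (Dlist is F)" using F by (simp add: smooth_fun_def)
  hence "continuous_on UNIV (\<lambda>x. Dlist is F (c *\<^sub>R x))"
    by (rule continuous_on_compose2) (auto intro!: continuous_intros)
  thus "continuous_on UNIV (Dlist is (\<lambda>x. F (c *\<^sub>R x)))"
    unfolding e by (intro continuous_intros)
  have d0: "((\<lambda>t. Dlist is F (c *\<^sub>R x + t *\<^sub>R axis i 1)) has_real_derivative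
       partial_der i (Dlist is F) (c *\<^sub>R x)) (at (c * 0))"
    using smooth_line_deriv[OF F, of "is" "c *\<^sub>R x" i] by simp
  have "((\<lambda>t. c ^ length is * Dlist is F (c *\<^sub>R x + (c * t) *\<^sub>R axis i 1)) has_real_derivative
      c ^ length is * (partial_der i (Dlist is F) (c *\<^sub>R x) * c)) (at 0)"
    by (intro DERIV_cmult DERIV_chain2[where g="\<lambda>t. c * t" and x=0, OF d0]) (auto intro!: derivative_eq_intros)
  moreover have "(\<lambda>t. c ^ length is * Dlist is F (c *\<^sub>R x + (c * t) *\<^sub>R axis i 1))
      = (\<lambda>t. Dlist is (\<lambda>x. F (c *\<^sub>R x)) (x + t *\<^sub>R axis i 1))"
    by (simp add: scaleR_add_right e)
  ultimately show "(\<lambda>t. Dlist is (\<lambda>x. F (c *\<^sub>R x)) (x + t *\<^sub>R axis i 1)) differentiable at 0"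
    by (metis has_field_derivative_imp_has_derivative differentiableI)
qed

lemma test_scale:
  fixes F :: "real^'n::finite \<Rightarrow> real"
  assumes F: "test_fun F" and c: "c > 0"
  shows "test_fun (\<lambda>x. F (c *\<^sub>R x))"
proof -
  have "bounded {x. F x \<noteq> 0}" using F by (simp add: test_fun_def compact_closure)
  then obtain B where B: "\<And>y. F y \<noteq> 0 \<Longrightarrow> norm y \<le> B" by (auto simp: bounded_iff)
  have "{x. F (c *\<^sub>R x) \<noteq> 0} \<subseteq> cball 0 (B / c)"
  proof
    fix x assume "x \<in> {x. F (c *\<^sub>R x) \<noteq> 0}"
    hence "norm (c *\<^sub>R x) \<le> B" using B by blast
    thus "x \<in> cball 0 (B / c)" using c by (simp add: field_simps)
  qed
  hence "bounded {x. F (c *\<^sub>R x) \<noteq> 0}" by (rule bounded_subset[OF bounded_cball])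
  thus ?thesis using smooth_scale[of F c] F by (simp add: test_fun_def compact_closure)
qed

lemma Dalpha_scale:
  fixes F :: "real^'n::finite \<Rightarrow> real"
  assumes F: "smooth_fun F"
  shows "Dalpha \<alpha> (\<lambda>x. F (c *\<^sub>R x)) x = c ^ size \<alpha> * Dalpha \<alpha> F (c *\<^sub>R x)"
proof -
  have "mset (SOME is. mset is = \<alpha>) = \<alpha>" by (rule someI_ex) (rule ex_mset)
  hence "length (SOME is. mset is = \<alpha>) = size \<alpha>" by (metis size_mset)
  thus ?thesis by (simp add: Dalpha_def Dlist_scale[OF F])
qed



lemma young_step:
  fixes a b U phi K d c lam :: real
  assumes lam: "lam > 1" and a: "a > 0" and b: "b > 0" and U: "U \<ge> 0" and phi: "phi \<ge> 0"
    and K: "K \<ge> 0" and d: "d > 0" and c: "c > 0" and cle: "c \<le> a powr (- lam) * b"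
  shows "a * U * K * phi powr (1/lam) \<le>
     d powr lam / lam * (b * U powr lam) * phi
     + d powr (- (lam/(lam-1))) / (lam/(lam-1)) * K powr (lam/(lam-1)) * c powr (- 1/(lam-1))"
proof -
  define q where "q = lam/(lam-1)"
  have q: "q > 1" "1/lam + 1/q = 1" using lam by (auto simp: q_def field_simps)
  define X where "X = d * b powr (1/lam) * U * phi powr (1/lam)"
  define Y where "Y = a * b powr (-1/lam) * K / d"
  have X0: "X \<ge> 0" and Y0: "Y \<ge> 0" using assms by (auto simp: X_def Y_def)
  have XY: "X * Y = a * U * K * phi powr (1/lam)"
  proof -
    have "b powr (1/lam) * b powr (-1/lam) = 1" using b by (simp add: powr_add[symmetric])
    hence "X * Y = a * U * K * phi powr (1/lam) * (b powr (1/lam) * b powr (-1/lam)) * (d / d)"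
      unfolding X_def Y_def by (simp add: field_simps)
    thus ?thesis using d \<open>b powr (1/lam) * b powr (-1/lam) = 1\<close> by simp
  qed
  have Xp: "X powr lam = d powr lam * (b * U powr lam) * phi"
  proof -
    have "X powr lam = d powr lam * (b powr (1/lam)) powr lam * U powr lam * (phi powr (1/lam)) powr lam"
      unfolding X_def using assms by (simp add: powr_mult)
    also have "(b powr (1/lam)) powr lam = b" using lam b by (simp add: powr_powr)
    also have "(phi powr (1/lam)) powr lam = phi" using lam phi
      by (cases "phi = 0") (simp_all add: powr_powr)
    finally show ?thesis by (simp add: algebra_simps)
  qed
  have Yp: "Y powr q \<le> d powr (- q) * K powr q * c powr (- 1/(lam-1))"
  proof -
    have "Y powr q = (a powr (-lam) * b) powr (- 1/(lam-1)) * K powr q * d powr (-q)"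
    proof -
      have "Y powr q = a powr q * (b powr (-1/lam)) powr q * K powr q * (inverse d) powr q"
        unfolding Y_def using assms by (simp add: powr_mult divide_inverse)
      also have "(b powr (-1/lam)) powr q = b powr (- 1/(lam-1))"
        using lam by (simp add: powr_powr q_def)
      also have "(inverse d) powr q = d powr (-q)" using d by (simp add: powr_minus inverse_eq_divide powr_divide)
      also have "a powr q = (a powr (-lam)) powr (- 1/(lam-1))"
        using lam by (simp add: powr_powr q_def)
      finally show ?thesis using a b by (simp add: powr_mult algebra_simps)
    qed
    also have "\<dots> \<le> c powr (- 1/(lam-1)) * K powr q * d powr (-q)"
      using lam c cle by (intro mult_right_mono powr_mono2') auto
    finally show ?thesis by (simp add: algebra_simps)
  qed
  have "a * U * K * phi powr (1/lam) \<le> X powr lam / lam + Y powr q / q"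
    unfolding XY[symmetric] by (rule Youngs_inequality[OF lam q(1) q(2) X0 Y0])
  also have "\<dots> \<le> d powr lam / lam * (b * U powr lam) * phi
     + d powr (- q) / q * K powr q * c powr (- 1/(lam-1))"
    unfolding Xp using Yp q(1) lam by (auto simp: field_simps intro!: divide_right_mono)
  finally show ?thesis by (simp add: q_def)
qed



lemma opt_delta:
  fixes lam I W Z :: real
  assumes lam: "lam > 1" and I: "I \<ge> 0" and W: "W \<ge> 0" and Z: "Z > 0"
    and H: "\<And>d. d > 0 \<Longrightarrow> I \<le> d powr lam / lam * W + d powr (- (lam/(lam-1))) / (lam/(lam-1)) * Z"
  shows "I powr lam \<le> W * Z powr (lam - 1)"
proof -
  define q where "q = lam/(lam-1)"
  have q: "q > 1" "1/lam + 1/q = 1" "1/q = (lam-1)/lam" using lam by (auto simp: q_def field_simps)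
  show ?thesis
  proof (cases "W > 0")
    case True
    define t where "t = Z / W"
    have t: "t > 0" using True Z by (simp add: t_def)
    define d where "d = t powr (1/(lam*q))"
    have d: "d > 0" using t by (simp add: d_def)
    have d1: "d powr lam = t powr (1/q)" using t lam q(1) by (simp add: d_def powr_powr field_simps)
    have d2: "d powr (-q) = t powr (-1/lam)" using t lam q(1) by (simp add: d_def powr_powr field_simps)
    have e1: "t powr (1/q) * W = Z powr (1/q) * W powr (1/lam)"
    proof -
      have "t powr (1/q) * W = Z powr (1/q) * (W powr (1/q))/ W powr (1/q) * W / W powr (1/q)"
        using True Z by (simp add: t_def powr_divide)
      also have "\<dots> = Z powr (1/q) * W powr (1 - 1/q)"
        using True by (simp add: powr_diff)
      moreover have "1 - 1/q = 1/lam" using q(2) by linarith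
      ultimately show ?thesis by (simp add: algebra_simps)
    qed
    have e2: "t powr (-1/lam) * Z = Z powr (1/q) * W powr (1/lam)"
    proof -
      have "t powr (-1/lam) * Z = Z powr (-1/lam) * Z * W powr (1/lam)"
        using True Z by (simp add: t_def powr_divide powr_minus_divide divide_simps)
      also have "Z powr (-1/lam) * Z = Z powr (-1/lam + 1)"
        using Z powr_add[of Z "-1/lam" 1] by (simp del: minus_divide_left)
      also have "-1/lam + 1 = 1/q" using q(2) by linarith
      finally show ?thesis by (simp add: algebra_simps)
    qed
    have "I \<le> d powr lam / lam * W + d powr (-q) / q * Z" using H[OF d] by (simp add: q_def)
    also have "\<dots> = (1/lam + 1/q) * (Z powr (1/q) * W powr (1/lam))"
      using e1 e2 by (simp add: d1 d2 field_simps)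
    also have "\<dots> = Z powr (1/q) * W powr (1/lam)" using q(2) by simp
    finally have "I \<le> Z powr (1/q) * W powr (1/lam)" .
    hence "I powr lam \<le> (Z powr (1/q) * W powr (1/lam)) powr lam"
      using I lam by (intro powr_mono2) auto
    also have "\<dots> = Z powr (lam - 1) * W"
      using Z True lam q(3) by (simp add: powr_mult powr_powr)
    finally show ?thesis by (simp add: mult.commute)
  next
    case False
    hence W0: "W = 0" using W by simp
    have "I = 0"
    proof (rule ccontr)
      assume "I \<noteq> 0"
      hence Ip: "I > 0" using I by simp
      define d where "d = (2 * Z / (q * I)) powr (1/q)"
      have d: "d > 0" using Ip Z q by (simp add: d_def)
      have "d powr (-q) = (2 * Z / (q * I)) powr (1/q * (-q))"
        unfolding d_def by (rule powr_powr)
      also have "1/q * (-q) = -1" using q(1) by simp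
      finally have "d powr (-q) = (2 * Z / (q * I)) powr (-1)" .
      also have "\<dots> = q * I / (2 * Z)" using Ip Z q(1) by (simp add: powr_minus)
      finally have "d powr (-q) / q * Z = I / 2" using Z q by (simp add: field_simps)
      moreover have "I \<le> d powr (-q) / q * Z" using H[OF d] W0 unfolding q_def by simp
      ultimately have "I \<le> I / 2" by metis
      thus False using Ip by linarith
    qed
    thus ?thesis using W0 by simp
  qed
qed

lemma min_lemma:
  fixes lam t :: real
  assumes lam: "lam > 1" and t: "t \<ge> 1"
  shows "min 1 (t - 1) \<le> max (1 / (1 - 2 powr (1 - lam))) (2 powr lam / (lam - 1)) * (1 - t powr (1 - lam))"
proof -
  define C where "C = max (1 / (1 - 2 powr (1 - lam))) (2 powr lam / (lam - 1))"
  have h2: "2 powr (1 - lam) < 1" using lam by (simp add: powr_less_one)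
  have "t powr (1 - lam) \<le> t powr 0" using t lam by (intro powr_mono) auto
  hence nn: "1 - t powr (1 - lam) \<ge> 0" using t by simp
  show ?thesis
  proof (cases "t \<ge> 2")
    case True
    have "t powr (1 - lam) \<le> 2 powr (1 - lam)" using True lam by (intro powr_mono2') auto
    hence "1 \<le> (1 - t powr (1 - lam)) / (1 - 2 powr (1 - lam))" using h2 by (simp add: field_simps)
    also have "\<dots> \<le> C * (1 - t powr (1 - lam))"
      using nn h2 by (simp add: C_def divide_inverse mult.commute mult_left_mono)
    finally show ?thesis unfolding C_def by simp
  next
    case False
    \<comment> \<open>Bernoulli-type: lam y^(lam-1) <= (lam-1) y^lam + 1 for y = 1/t\<close>
    define y where "y = 1 / t"
    have y: "y > 0" "y \<le> 1" using t by (auto simp: y_def)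
    have "(y powr lam) powr ((lam-1)/lam) * 1 powr (1/lam) \<le> (lam-1)/lam * y powr lam + 1/lam * 1"
      using y lam by (intro Youngs_inequality_0) (auto simp: field_simps)
    hence yb: "y powr (lam - 1) \<le> (lam-1)/lam * y powr lam + 1/lam"
      using y lam by (simp add: powr_powr)
    have "(lam - 1) * t powr (- lam) * (t - 1) \<le> 1 - t powr (1 - lam)"
    proof -
      have "t powr (1 - lam) = y powr (lam - 1)" using t
        by (simp add: y_def powr_divide powr_minus_divide[symmetric] powr_minus)
      moreover have "t powr (-lam) * t = y powr (lam - 1)" using t
        by (simp add: y_def powr_minus_divide powr_diff powr_divide divide_simps)
      moreover have "t powr (-lam) = y powr lam" using t
        by (simp add: y_def powr_minus_divide powr_divide)
      ultimately show ?thesis using yb lam by (simp add: algebra_simps field_simps)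
    qed
    moreover have "t powr (-lam) \<ge> 2 powr (-lam)" using False t lam by (intro powr_mono2') auto
    ultimately have "(lam - 1) * 2 powr (- lam) * (t - 1) \<le> 1 - t powr (1 - lam)"
      using t lam by (smt (verit, best) mult_left_mono mult_right_mono)
    hence "t - 1 \<le> 2 powr lam / (lam - 1) * (1 - t powr (1 - lam))"
      using lam by (simp add: powr_minus field_simps)
    also have "\<dots> \<le> C * (1 - t powr (1 - lam))" by (rule mult_right_mono[OF _ nn]) (simp add: C_def)
    finally show ?thesis unfolding C_def by simp
  qed
qed



lemma cont_meas_leb: "continuous_on UNIV f \<Longrightarrow> (f :: real^'n::finite \<Rightarrow> real) \<in> borel_measurable lebesgue"
  using continuous_imp_measurable_on_sets_lebesgue[of UNIV f] by (simp add: lebesgue_on_UNIV_eq)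

lemma integral_le_AE_bound:
  fixes g :: "'a \<Rightarrow> real"
  assumes "integrable M T" "AE x in M. \<bar>g x\<bar> \<le> T x"
  shows "integral\<^sup>L M g \<le> integral\<^sup>L M T"
  by (rule integral_mono_AE'[OF assms(1)]) (use assms(2) in \<open>auto elim!: eventually_mono\<close>)

locale sol =
  fixes m :: nat and lam :: real and \<sigma> :: real
    and A :: "'n::finite multiset \<Rightarrow> real^'n \<Rightarrow> real \<Rightarrow> real"
    and a b u :: "real^'n \<Rightarrow> real"
  assumes m1: "m \<ge> 1" and lam1: "lam > 1"
    and bm: "b \<in> borel_measurable lebesgue" and bpos: "\<And>x. b x > 0"
    and am: "a \<in> borel_measurable lebesgue" and apos: "\<And>x. a x > 0"
    and Ab: "AE x in lebesgue. \<forall>\<zeta> \<alpha>. size \<alpha> = m \<longrightarrow> \<bar>A \<alpha> x \<zeta>\<bar> \<le> a x * \<bar>\<zeta>\<bar>"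
    and sig: "\<sigma> > 1"
    and sol: "is_solution m lam A b u"
begin

definition ff :: "real^'n \<Rightarrow> real" where "ff x = b x * \<bar>u x\<bar> powr lam"

lemma ff_nonneg: "ff x \<ge> 0"
  using bpos[of x] by (simp add: ff_def)

lemma ff_loc: "compact K \<Longrightarrow> integrable lebesgue (\<lambda>x. indicator K x *\<^sub>R ff x)"
  using sol by (simp add: is_solution_def loc_integrable_def set_integrable_def ff_def[abs_def])

lemma ff_meas: "ff \<in> borel_measurable lebesgue"
proof (rule borel_measurable_LIMSEQ_real)
  fix i :: nat
  show "(\<lambda>x. indicator (cball 0 (real i)) x *\<^sub>R ff x) \<in> borel_measurable lebesgue"
    using ff_loc[of "cball 0 (real i)"] by (intro borel_measurable_integrable) auto
next
  fix x :: "real^'n"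
  obtain N :: nat where N: "norm x \<le> real N" using real_arch_simple by blast
  have "\<forall>\<^sub>F i in sequentially. indicator (cball 0 (real i)) x *\<^sub>R ff x = ff x"
    unfolding eventually_sequentially
    by (intro exI[of _ N] allI impI) (use N in \<open>auto simp: indicator_def\<close>)
  thus "(\<lambda>i. indicator (cball 0 (real i)) x *\<^sub>R ff x) \<longlonglongrightarrow> ff x"
    by (rule tendsto_eventually)
qed

lemma absu_eq: "\<bar>u x\<bar> = (ff x / b x) powr (1/lam)"
proof -
  have "ff x / b x = \<bar>u x\<bar> powr lam" using bpos[of x] by (simp add: ff_def)
  show ?thesis
  proof (cases "u x = 0")
    case True
    have "ff x = 0" using True lam1 by (simp add: ff_def)
    thus ?thesis using True by simp
  next
    case False
    have "(\<bar>u x\<bar> powr lam) powr (1/lam) = \<bar>u x\<bar> powr (lam * (1/lam))" by (rule powr_powr)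
    also have "lam * (1/lam) = 1" using lam1 by simp
    finally have e: "(\<bar>u x\<bar> powr lam) powr (1/lam) = \<bar>u x\<bar> powr 1" .
    have "\<bar>u x\<bar> powr 1 = \<bar>u x\<bar>" using False by simp
    thus ?thesis using e \<open>ff x / b x = \<bar>u x\<bar> powr lam\<close> by metis
  qed
qed

lemma absu_meas: "(\<lambda>x. \<bar>u x\<bar>) \<in> borel_measurable lebesgue"
  unfolding absu_eq using ff_meas bm by (intro powr_real_measurable borel_measurable_divide) auto

lemma ff_int_set:
  assumes "S \<in> sets lebesgue" "bounded S"
  shows "integrable lebesgue (\<lambda>x. indicator S x * ff x)"
proof -
  obtain R where "\<forall>x\<in>S. norm x \<le> R" using assms(2) unfolding bounded_iff by blast
  hence R: "S \<subseteq> cball 0 R" by auto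
  have "integrable lebesgue (\<lambda>x. indicator S x *\<^sub>R (indicator (cball 0 R) x *\<^sub>R ff x))"
    by (intro integrable_mult_indicator assms(1) ff_loc compact_cball)
  moreover have "(\<lambda>x. indicator S x *\<^sub>R (indicator (cball 0 R) x *\<^sub>R ff x)) = (\<lambda>x. indicator S x * ff x)"
    using R by (intro ext) (auto simp: indicator_def)
  ultimately show ?thesis by simp
qed

end


lemma Z_alg:
  fixes r c M V s lam :: real and m n :: nat
  assumes r: "r > 0" and c: "c > 0" and M: "M > 0" and V: "V > 0" and s: "s > 0" and lam: "lam > 1"
  shows "((1/r)^m * M) powr (lam/(lam-1)) * c powr (-1/(lam-1)) * (V * (s * r)^n)
     = (M powr (lam/(lam-1)) * V * s^n) *
       (c * r powr ((real m - real n) * lam + real n)) powr (-1/(lam-1))"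
proof -
  define q where "q = lam/(lam-1)"
  define g where "g = (real m - real n) * lam + real n"
  have l1: "lam - 1 > 0" using lam by simp
  have e1: "((1/r)^m * M) powr q = r powr (- (real m * q)) * M powr q"
    using r M by (simp add: powr_mult powr_realpow[symmetric] powr_powr powr_minus_divide
        powr_divide)
  have e2: "(s * r)^n = s^n * r powr real n" using r s by (simp add: power_mult_distrib powr_realpow)
  have e3: "(c * r powr g) powr (-1/(lam-1)) = c powr (-1/(lam-1)) * r powr (g * (-1/(lam-1)))"
    using r c by (simp add: powr_mult powr_powr)
  have e4: "- (real m * q) + real n = g * (-1/(lam-1))"
    using l1 by (simp add: q_def g_def field_simps)
  have e5: "r powr real n * r powr (- (real m * q)) = r powr (g * (-1/(lam-1)))"
    using e4 by (simp add: powr_add[symmetric] add.commute)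
  have "((1/r)^m * M) powr q * c powr (-1/(lam-1)) * (V * (s * r)^n)
      = (M powr q * V * s^n) * c powr (-1/(lam-1)) * (r powr real n * r powr (- (real m * q)))"
    unfolding e1 e2 by (simp add: algebra_simps)
  also have "\<dots> = (M powr q * V * s^n) * (c * r powr g) powr (-1/(lam-1))"
    unfolding e5 e3 by (simp add: algebra_simps)
  finally show ?thesis unfolding q_def g_def .
qed



lemma closed_leb: "closed S \<Longrightarrow> (S :: (real^'n::finite) set) \<in> sets lebesgue"
  by (metis borel_closed sets_completionI_sets sets_lborel)

context sol begin

definition RR :: "real \<Rightarrow> (real^'n) set" where
  "RR r = {x. r \<le> norm x \<and> norm x \<le> sqrt \<sigma> * r}"
definition FF :: "real \<Rightarrow> real" where
  "FF r = (\<integral>x. indicator (ball 0 r) x * ff x \<partial>lebesgue)"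
definition WW :: "real \<Rightarrow> real" where
  "WW r = (\<integral>x. indicator (RR r) x * ff x \<partial>lebesgue)"
definition gam :: real where
  "gam = (real m - real CARD('n)) * lam + real CARD('n)"

lemma RR_closed: "closed (RR r)"
  unfolding RR_def by (intro closed_Collect_conj closed_Collect_le continuous_intros)

lemma RR_sub: "RR r \<subseteq> cball 0 (sqrt \<sigma> * r)" by (auto simp: RR_def)

lemma RR_meas: "RR r \<in> sets lebesgue" by (rule closed_leb[OF RR_closed])

lemma RR_bounded: "bounded (RR r)" by (rule bounded_subset[OF bounded_cball RR_sub])

lemma measure_RR: "r > 0 \<Longrightarrow> measure lebesgue (RR r) \<le> unit_ball_vol (real CARD('n)) * (sqrt \<sigma> * r) ^ CARD('n)"
proof -
  assume r: "r > 0"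
  have "measure lebesgue (RR r) \<le> measure lebesgue (cball (0::real^'n) (sqrt \<sigma> * r))"
    by (intro measure_mono_fmeasurable RR_sub RR_meas) (auto intro: lmeasurable_cball)
  also have "\<dots> = measure lborel (cball (0::real^'n) (sqrt \<sigma> * r))"
    by (simp add: measure_completion)
  also have "\<dots> = unit_ball_vol (real CARD('n)) * (sqrt \<sigma> * r) ^ CARD('n)"
    using content_cball[of "sqrt \<sigma> * r" "0::real^'n"] r sig by simp
  finally show ?thesis .
qed

lemma emeasure_RR_fin: "emeasure lebesgue (RR r) < \<infinity>"
proof -
  have c: "cball (0::real^'n) (sqrt \<sigma> * r) \<in> fmeasurable lebesgue" by (rule lmeasurable_cball)
  have "emeasure lebesgue (RR r) \<le> emeasure lebesgue (cball (0::real^'n) (sqrt \<sigma> * r))"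
    using c by (intro emeasure_mono RR_sub) (auto simp: fmeasurable_def)
  also have "\<dots> < \<infinity>" using c by (simp add: fmeasurable_def)
  finally show ?thesis .
qed

lemma FF_int: "integrable lebesgue (\<lambda>x. indicator (ball 0 r) x * ff x)"
  by (intro ff_int_set) (auto intro: borel_open sets_completionI_sets)

lemma WW_int: "integrable lebesgue (\<lambda>x. indicator (RR r) x * ff x)"
  by (intro ff_int_set RR_meas RR_bounded)

lemma FF_nonneg: "FF r \<ge> 0"
  unfolding FF_def using ff_nonneg by (intro integral_nonneg_AE) auto

lemma WW_nonneg: "WW r \<ge> 0"
  unfolding WW_def using ff_nonneg by (intro integral_nonneg_AE) auto

lemma FF_mono: "r \<le> r' \<Longrightarrow> FF r \<le> FF r'"
  unfolding FF_def using ff_nonneg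
  by (intro integral_mono FF_int) (auto simp: indicator_def)

lemma FF_WW: "r > 0 \<Longrightarrow> FF r + WW r \<le> FF (\<sigma> * r)"
proof -
  assume r: "r > 0"
  have s1: "sqrt \<sigma> > 1" using sig by simp
  have "sqrt \<sigma> * 1 < sqrt \<sigma> * sqrt \<sigma>" using s1 by (intro mult_strict_left_mono) auto
  hence ss: "sqrt \<sigma> < \<sigma>" using sig by simp
  have "FF r + WW r = (\<integral>x. indicator (ball 0 r) x * ff x + indicator (RR r) x * ff x \<partial>lebesgue)"
    unfolding FF_def WW_def using Bochner_Integration.integral_add[OF FF_int WW_int, of r r] by simp
  also have "\<dots> \<le> FF (\<sigma> * r)" unfolding FF_def
  proof (intro integral_mono Bochner_Integration.integrable_add FF_int WW_int)
    fix x :: "real^'n"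
    have h1: "sqrt \<sigma> * r < \<sigma> * r" using ss r by simp
    have h2: "r < \<sigma> * r" using sig r by simp
    show "indicator (ball 0 r) x * ff x + indicator (RR r) x * ff x \<le> indicator (ball 0 (\<sigma> * r)) x * ff x"
      using ff_nonneg[of x] r sig h1 h2 less_le_trans[of "norm x" "sqrt \<sigma> * r" "\<sigma> * r"]
        less_trans[of "norm x" r "\<sigma> * r"] le_less_trans[of "norm x" "sqrt \<sigma> * r" "\<sigma> * r"]
      by (auto simp: indicator_def RR_def simp del: mult_less_cancel_right_pos mult_less_cancel_right)
  qed
  finally show ?thesis .
qed

end


context sol begin

lemma core:
  fixes \<Phi> :: "real^'n \<Rightarrow> real" and M r c d :: real
  assumes \<Phi>t: "test_fun \<Phi>" and \<Phi>01: "\<And>y. 0 \<le> \<Phi> y \<and> \<Phi> y \<le> 1"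
    and \<Phi>1: "\<And>y. norm y \<le> 1 \<Longrightarrow> \<Phi> y = 1" and \<Phi>0: "\<And>y. norm y \<ge> sqrt \<sigma> \<Longrightarrow> \<Phi> y = 0"
    and M: "M > 0"
    and \<Phi>D: "\<And>y. (\<Sum>\<alpha>\<in>{\<alpha>. size \<alpha> = m}. \<bar>Dalpha \<alpha> \<Phi> y\<bar>)
            \<le> M * \<Phi> y powr (1/lam) * indicator {y. 1 \<le> norm y \<and> norm y \<le> sqrt \<sigma>} y"
    and r: "r > 0" and c: "c > 0"
    and cb: "AE x in lebesgue. x \<in> RR r \<longrightarrow> c \<le> a x powr (-lam) * b x"
  shows "FF r \<le> (\<integral>x. ff x * \<Phi> ((1/r) *\<^sub>R x) \<partial>lebesgue)"
    and "(\<integral>x. ff x * \<Phi> ((1/r) *\<^sub>R x) * indicator (RR r) x \<partial>lebesgue) \<le> (\<integral>x. ff x * \<Phi> ((1/r) *\<^sub>R x) \<partial>lebesgue)"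
    and "(\<integral>x. ff x * \<Phi> ((1/r) *\<^sub>R x) * indicator (RR r) x \<partial>lebesgue) \<le> WW r"
    and "0 \<le> (\<integral>x. ff x * \<Phi> ((1/r) *\<^sub>R x) * indicator (RR r) x \<partial>lebesgue)"
    and "d > 0 \<Longrightarrow> (\<integral>x. ff x * \<Phi> ((1/r) *\<^sub>R x) \<partial>lebesgue) \<le>
       d powr lam / lam * (\<integral>x. ff x * \<Phi> ((1/r) *\<^sub>R x) * indicator (RR r) x \<partial>lebesgue)
       + d powr (- (lam/(lam-1))) / (lam/(lam-1)) *
         (((1/r)^m * M) powr (lam/(lam-1)) * c powr (-1/(lam-1)) *
          (unit_ball_vol (real CARD('n)) * (sqrt \<sigma> * r)^CARD('n)))"
proof -
  define \<phi> where "\<phi> = (\<lambda>x. \<Phi> ((1/r) *\<^sub>R x))"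
  define I where "I = (\<integral>x. ff x * \<phi> x \<partial>lebesgue)"
  define J where "J = (\<integral>x. ff x * \<phi> x * indicator (RR r) x \<partial>lebesgue)"
  have \<phi>eq: "\<Phi> ((1/r) *\<^sub>R x) = \<phi> x" for x by (simp add: \<phi>_def)
  have nsc: "norm ((1/r) *\<^sub>R x) = norm x / r" for x :: "real^'n" using r by simp
  have \<phi>01: "0 \<le> \<phi> x" "\<phi> x \<le> 1" for x using \<Phi>01 by (auto simp: \<phi>_def)
  have \<phi>1: "norm x \<le> r \<Longrightarrow> \<phi> x = 1" for x
    using \<Phi>1[of "(1/r) *\<^sub>R x"] r by (simp add: \<phi>_def nsc)
  have \<phi>0: "norm x \<ge> sqrt \<sigma> * r \<Longrightarrow> \<phi> x = 0" for x
    using \<Phi>0[of "(1/r) *\<^sub>R x"] r by (simp add: \<phi>_def nsc pos_le_divide_eq)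
  have \<Phi>s: "smooth_fun \<Phi>" using \<Phi>t by (simp add: test_fun_def)
  have \<phi>t: "test_fun \<phi>" unfolding \<phi>_def using test_scale[OF \<Phi>t, of "1/r"] r by simp
  have \<phi>c: "continuous_on UNIV \<phi>"
    using \<phi>t unfolding test_fun_def smooth_fun_def by (metis Dlist.simps(1))
  have \<phi>m: "\<phi> \<in> borel_measurable lebesgue" by (rule cont_meas_leb[OF \<phi>c])
  have indsc: "indicator {y. 1 \<le> norm y \<and> norm y \<le> sqrt \<sigma>} ((1/r) *\<^sub>R x) = (indicator (RR r) x :: real)" for x
    using r by (simp add: indicator_def RR_def nsc le_divide_eq_1 divide_le_eq)
  have int1: "integrable lebesgue (\<lambda>x. ff x * \<phi> x)"
  proof -
    have ci: "integrable lebesgue (\<lambda>x. indicator (cball (0::real^'n) (sqrt \<sigma> * r)) x * ff x)"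
      by (intro ff_int_set closed_leb) auto
    show ?thesis
    proof (rule Bochner_Integration.integrable_bound[OF ci])
    show "(\<lambda>x. ff x * \<phi> x) \<in> borel_measurable lebesgue" using ff_meas \<phi>m by measurable
    show "AE x in lebesgue. norm (ff x * \<phi> x) \<le> norm (indicator (cball 0 (sqrt \<sigma> * r)) x * ff x)"
    proof (intro AE_I2)
      fix x :: "real^'n"
      show "norm (ff x * \<phi> x) \<le> norm (indicator (cball 0 (sqrt \<sigma> * r)) x * ff x)"
      proof (cases "norm x \<le> sqrt \<sigma> * r")
        case True thus ?thesis using ff_nonneg[of x] \<phi>01[of x]
          by (simp add: indicator_def mult_left_le abs_mult)
      next
        case False thus ?thesis using \<phi>0[of x] by simp
      qed
    qed
    qed
  qed
  have RRm: "(\<lambda>x. indicator (RR r) x :: real) \<in> borel_measurable lebesgue"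
    using RR_meas by measurable
  have int2: "integrable lebesgue (\<lambda>x. ff x * \<phi> x * indicator (RR r) x)"
  proof (rule Bochner_Integration.integrable_bound[OF WW_int])
    show "(\<lambda>x. ff x * \<phi> x * indicator (RR r) x) \<in> borel_measurable lebesgue"
      using ff_meas \<phi>m RRm by measurable
    show "AE x in lebesgue. norm (ff x * \<phi> x * indicator (RR r) x) \<le> norm (indicator (RR r) x * ff x)"
      using ff_nonneg \<phi>01 by (intro AE_I2) (auto simp: indicator_def abs_mult mult_left_le)
  qed
  show "FF r \<le> (\<integral>x. ff x * \<Phi> ((1/r) *\<^sub>R x) \<partial>lebesgue)"
    unfolding \<phi>eq FF_def
  proof (intro integral_mono FF_int int1)
    fix x :: "real^'n"
    show "indicator (ball 0 r) x * ff x \<le> ff x * \<phi> x"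
      using \<phi>1[of x] \<phi>01[of x] ff_nonneg[of x] by (auto simp: indicator_def)
  qed
  show "(\<integral>x. ff x * \<Phi> ((1/r) *\<^sub>R x) * indicator (RR r) x \<partial>lebesgue) \<le> (\<integral>x. ff x * \<Phi> ((1/r) *\<^sub>R x) \<partial>lebesgue)"
    unfolding \<phi>eq
    using ff_nonneg \<phi>01 by (intro integral_mono int1 int2) (auto simp: indicator_def)
  show "(\<integral>x. ff x * \<Phi> ((1/r) *\<^sub>R x) * indicator (RR r) x \<partial>lebesgue) \<le> WW r"
    unfolding \<phi>eq WW_def
    using ff_nonneg \<phi>01 by (intro integral_mono WW_int int2) (auto simp: indicator_def mult_left_le)
  show "0 \<le> (\<integral>x. ff x * \<Phi> ((1/r) *\<^sub>R x) * indicator (RR r) x \<partial>lebesgue)"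
    unfolding \<phi>eq
    using ff_nonneg \<phi>01 by (intro integral_nonneg_AE AE_I2) auto
  assume d: "d > 0"
  define q where "q = lam / (lam - 1)"
  define K where "K = (1/r)^m * M"
  have K: "K \<ge> 0" using r M by (simp add: K_def)
  define D2 where "D2 = d powr (- q) / q * K powr q * c powr (- 1/(lam-1))"
  define T where "T x = d powr lam / lam * (ff x * \<phi> x * indicator (RR r) x) + D2 * indicator (RR r) x" for x
  define Sm where "Sm x = (\<Sum>\<alpha>\<in>{\<alpha>. size \<alpha> = m}. A \<alpha> x (u x) * Dalpha \<alpha> \<phi> x)" for x
  have weak: "I \<le> integral\<^sup>L lebesgue Sm"
  proof -
    have "(\<integral>x. b x * \<bar>u x\<bar> powr lam * \<phi> x \<partial>lebesgue) \<le> integral\<^sup>L lebesgue Sm"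
      using sol \<phi>t \<phi>01 unfolding is_solution_def Sm_def by blast
    thus ?thesis by (simp add: I_def ff_def)
  qed
  have Tint: "integrable lebesgue T"
    unfolding T_def using int2 emeasure_RR_fin RR_meas
    by (intro Bochner_Integration.integrable_add integrable_mult_right integrable_real_indicator) auto
  have AEb: "AE x in lebesgue. \<bar>Sm x\<bar> \<le> T x"
    using Ab cb
  proof (eventually_elim)
    case (elim x)
    have s1: "\<bar>Sm x\<bar> \<le> (\<Sum>\<alpha>\<in>{\<alpha>. size \<alpha> = m}. a x * \<bar>u x\<bar> * \<bar>Dalpha \<alpha> \<phi> x\<bar>)"
    proof -
      have "\<bar>Sm x\<bar> \<le> (\<Sum>\<alpha>\<in>{\<alpha>. size \<alpha> = m}. \<bar>A \<alpha> x (u x) * Dalpha \<alpha> \<phi> x\<bar>)"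
        unfolding Sm_def by (rule sum_abs)
      also have "\<dots> \<le> (\<Sum>\<alpha>\<in>{\<alpha>. size \<alpha> = m}. a x * \<bar>u x\<bar> * \<bar>Dalpha \<alpha> \<phi> x\<bar>)"
        using elim(1) by (intro sum_mono) (auto simp: abs_mult intro!: mult_right_mono)
      finally show ?thesis .
    qed
    have s2: "(\<Sum>\<alpha>\<in>{\<alpha>. size \<alpha> = m}. \<bar>Dalpha \<alpha> \<phi> x\<bar>) = (1/r)^m * (\<Sum>\<alpha>\<in>{\<alpha>. size \<alpha> = m}. \<bar>Dalpha \<alpha> \<Phi> ((1/r) *\<^sub>R x)\<bar>)"
      unfolding sum_distrib_left
      by (intro sum.cong refl) (use r in \<open>auto simp: \<phi>_def Dalpha_scale[OF \<Phi>s] abs_mult\<close>)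
    have s3: "(\<Sum>\<alpha>\<in>{\<alpha>. size \<alpha> = m}. \<bar>Dalpha \<alpha> \<phi> x\<bar>) \<le> K * \<phi> x powr (1/lam) * indicator (RR r) x"
      unfolding s2 K_def using \<Phi>D[of "(1/r) *\<^sub>R x"] r
      by (simp add: \<phi>_def indsc mult_left_mono mult.assoc)
    have "\<bar>Sm x\<bar> \<le> a x * \<bar>u x\<bar> * (K * \<phi> x powr (1/lam) * indicator (RR r) x)"
      using s1 s3 apos[of x] by (simp add: sum_distrib_left[symmetric] mult_left_mono order_trans)
    also have "\<dots> \<le> T x"
    proof (cases "x \<in> RR r")
      case True
      have "a x * \<bar>u x\<bar> * K * \<phi> x powr (1/lam) \<le>
         d powr lam / lam * (b x * \<bar>u x\<bar> powr lam) * \<phi> x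
         + d powr (- (lam/(lam-1))) / (lam/(lam-1)) * K powr (lam/(lam-1)) * c powr (- 1/(lam-1))"
        using elim(2) True by (intro young_step lam1 apos bpos K d c \<phi>01) auto
      thus ?thesis using True by (simp add: T_def D2_def q_def ff_def algebra_simps)
    next
      case False
      have "D2 \<ge> 0" using d K c lam1 by (simp add: D2_def q_def)
      thus ?thesis using False by (simp add: T_def)
    qed
    finally show ?case .
  qed
  have "I \<le> integral\<^sup>L lebesgue T"
    using weak integral_le_AE_bound[OF Tint AEb] by linarith
  also have "integral\<^sup>L lebesgue T = d powr lam / lam * J + D2 * measure lebesgue (RR r)"
    unfolding T_def J_def using int2 emeasure_RR_fin RR_meas
    by (subst Bochner_Integration.integral_add) (auto intro: integrable_real_indicator)
  also have "\<dots> \<le> d powr lam / lam * J + D2 * (unit_ball_vol (real CARD('n)) * (sqrt \<sigma> * r)^CARD('n))"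
  proof -
    have "D2 \<ge> 0" using d K c lam1 by (simp add: D2_def q_def)
    thus ?thesis using measure_RR[OF r] by (simp add: mult_left_mono)
  qed
  finally have fin: "I \<le> d powr lam / lam * J + D2 * (unit_ball_vol (real CARD('n)) * (sqrt \<sigma> * r)^CARD('n))" .
  show "(\<integral>x. ff x * \<Phi> ((1/r) *\<^sub>R x) \<partial>lebesgue) \<le>
       d powr lam / lam * (\<integral>x. ff x * \<Phi> ((1/r) *\<^sub>R x) * indicator (RR r) x \<partial>lebesgue)
       + d powr (- (lam/(lam-1))) / (lam/(lam-1)) *
         (((1/r)^m * M) powr (lam/(lam-1)) * c powr (-1/(lam-1)) *
          (unit_ball_vol (real CARD('n)) * (sqrt \<sigma> * r)^CARD('n)))"
    unfolding \<phi>eq using fin unfolding I_def J_def D2_def K_def q_def by (simp add: algebra_simps)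
qed

end


context sol begin

lemma estimates:
  "\<exists>C1 C2. C1 > 0 \<and> C2 > 0 \<and> (\<forall>r c. r > 0 \<longrightarrow> c > 0 \<longrightarrow>
     (AE x in lebesgue. x \<in> RR r \<longrightarrow> c \<le> a x powr (-lam) * b x) \<longrightarrow>
     FF r \<le> C2 * (c * r powr gam) powr (-1/(lam-1)) \<and> FF r powr lam * (c * r powr gam) \<le> C1 * WW r)"
proof -
  obtain \<Phi> :: "real^'n \<Rightarrow> real" and M0 where \<Phi>: "test_fun \<Phi>" "\<forall>y. 0 \<le> \<Phi> y \<and> \<Phi> y \<le> 1"
     "\<forall>y. norm y \<le> 1 \<longrightarrow> \<Phi> y = 1" "\<forall>y. norm y \<ge> sqrt \<sigma> \<longrightarrow> \<Phi> y = 0" "M0 \<ge> 0"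
     "\<forall>y. (\<Sum>\<alpha>\<in>{\<alpha>. size \<alpha> = m}. \<bar>Dalpha \<alpha> \<Phi> y\<bar>)
            \<le> M0 * \<Phi> y powr (1/lam) * indicator {y. 1 \<le> norm y \<and> norm y \<le> sqrt \<sigma>} y"
    using Phi_exists[OF sig lam1 m1] by blast
  define M where "M = M0 + 1"
  have M: "M > 0" using \<Phi>(5) by (simp add: M_def)
  have \<Phi>D: "(\<Sum>\<alpha>\<in>{\<alpha>. size \<alpha> = m}. \<bar>Dalpha \<alpha> \<Phi> y\<bar>)
            \<le> M * \<Phi> y powr (1/lam) * indicator {y. 1 \<le> norm y \<and> norm y \<le> sqrt \<sigma>} y" for y
  proof -
    have "M0 * (\<Phi> y powr (1/lam) * indicator {y. 1 \<le> norm y \<and> norm y \<le> sqrt \<sigma>} y)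
       \<le> M * (\<Phi> y powr (1/lam) * indicator {y. 1 \<le> norm y \<and> norm y \<le> sqrt \<sigma>} y)"
      by (intro mult_right_mono) (auto simp: M_def)
    thus ?thesis using \<Phi>(6)[rule_format, of y] by (simp add: mult.assoc)
  qed
  define n where "n = CARD('n)"
  define V where "V = unit_ball_vol (real n)"
  have V: "V > 0" by (simp add: V_def)
  define q where "q = lam / (lam - 1)"
  have q: "q > 0" using lam1 by (simp add: q_def)
  define Z0 where "Z0 = M powr q * V * sqrt \<sigma> ^ n"
  have Z0: "Z0 > 0" using M V sig by (simp add: Z0_def)
  define d0 where "d0 = (lam / 2) powr (1/lam)"
  have d0: "d0 > 0" using lam1 by (simp add: d0_def)
  have d0l: "d0 powr lam / lam = 1/2" using lam1 by (simp add: d0_def powr_powr)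
  define C2 where "C2 = 2 * (d0 powr (-q) / q * Z0)"
  define C1 where "C1 = Z0 powr (lam - 1)"
  have C2: "C2 > 0" using q Z0 d0 by (simp add: C2_def)
  have C1: "C1 > 0" using Z0 by (simp add: C1_def)
  have main: "FF r \<le> C2 * (c * r powr gam) powr (-1/(lam-1)) \<and> FF r powr lam * (c * r powr gam) \<le> C1 * WW r"
    if r: "r > 0" and c: "c > 0" and cb: "AE x in lebesgue. x \<in> RR r \<longrightarrow> c \<le> a x powr (-lam) * b x" for r c
  proof -
    note co = core[OF \<Phi>(1) _ _ _ M \<Phi>D r c cb]
    define I where "I = (\<integral>x. ff x * \<Phi> ((1/r) *\<^sub>R x) \<partial>lebesgue)"
    define J where "J = (\<integral>x. ff x * \<Phi> ((1/r) *\<^sub>R x) * indicator (RR r) x \<partial>lebesgue)"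
    define P where "P = c * r powr gam"
    have P: "P > 0" using c r by (simp add: P_def)
    define Z where "Z = Z0 * P powr (-1/(lam-1))"
    have Z: "Z > 0" using Z0 P by (simp add: Z_def)
    have Zeq: "((1/r)^m * M) powr (lam/(lam-1)) * c powr (-1/(lam-1)) *
          (unit_ball_vol (real CARD('n)) * (sqrt \<sigma> * r)^CARD('n)) = Z"
      unfolding Z_def Z0_def P_def gam_def V_def q_def n_def
      by (rule Z_alg) (use r c M sig lam1 in auto)
    have c1: "FF r \<le> I" and c2: "J \<le> I" and c3: "J \<le> WW r" and c4: "0 \<le> J"
      and c5: "\<And>d. d > 0 \<Longrightarrow> I \<le> d powr lam / lam * J + d powr (- (lam/(lam-1))) / (lam/(lam-1)) * Z"
      unfolding I_def J_def using co \<Phi>(2,3,4) Zeq by auto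
    have I0: "I \<ge> 0" using c1 FF_nonneg[of r] by linarith
    have E2: "FF r \<le> C2 * P powr (-1/(lam-1))"
    proof -
      have "I \<le> 1/2 * J + d0 powr (-q) / q * Z" using c5[OF d0] d0l by (simp add: q_def)
      hence "I \<le> 2 * (d0 powr (-q) / q * Z)" using c2 by linarith
      thus ?thesis using c1 by (simp add: C2_def Z_def mult.assoc)
    qed
    have E1: "FF r powr lam * P \<le> C1 * WW r"
    proof -
      have "I powr lam \<le> J * Z powr (lam - 1)"
        by (rule opt_delta[OF lam1 I0 c4 Z c5])
      also have "Z powr (lam - 1) = C1 * inverse P"
      proof -
        have "(P powr (-1/(lam-1))) powr (lam - 1) = P powr (-1)"
          using lam1 P by (simp add: powr_powr)
        thus ?thesis using Z0 P by (simp add: Z_def C1_def powr_mult powr_minus)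
      qed
      finally have "I powr lam \<le> J * (C1 * inverse P)" .
      moreover have "FF r powr lam \<le> I powr lam"
        using c1 FF_nonneg[of r] lam1 by (intro powr_mono2) auto
      ultimately have "FF r powr lam \<le> J * (C1 * inverse P)" by linarith
      hence "FF r powr lam * P \<le> J * C1" using P by (simp add: field_simps)
      also have "\<dots> \<le> WW r * C1" using c3 C1 by (intro mult_right_mono) auto
      finally show ?thesis by (simp add: mult.commute)
    qed
    show ?thesis using E1 E2 by (simp add: P_def)
  qed
  show ?thesis using C1 C2 main by blast
qed

end


context sol begin

definition fq :: "real^'n \<Rightarrow> real" where "fq x = a x powr (- lam) * b x"

lemma fq_nonneg: "fq x \<ge> 0" using bpos[of x] by (simp add: fq_def)

lemma essinf_le:
  assumes B: "B \<ge> 0" and H: "\<And>c'. c' > 0 \<Longrightarrow> (AE x in lebesgue. x \<in> S \<longrightarrow> c' \<le> fq x) \<Longrightarrow> c' \<le> B"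
  shows "essinf_on S fq \<le> ennreal B"
  unfolding essinf_on_def
proof (rule Sup_least)
  fix c assume "c \<in> {c. AE x in lebesgue. x \<in> S \<longrightarrow> c \<le> ennreal (fq x)}"
  hence c: "AE x in lebesgue. x \<in> S \<longrightarrow> c \<le> ennreal (fq x)" by simp
  show "c \<le> ennreal B"
  proof (cases c)
    case (real c0)
    show ?thesis
    proof (cases "c0 > 0")
      case True
      have "AE x in lebesgue. x \<in> S \<longrightarrow> c0 \<le> fq x"
        using c by (rule eventually_mono) (use real True fq_nonneg in \<open>auto simp: ennreal_le_iff\<close>)
      hence "c0 \<le> B" using H True by blast
      thus ?thesis using real by (simp add: ennreal_leI)
    next
      case False thus ?thesis using real by (simp add: ennreal_eq_0_iff)
    qed
  next
    case top
    have "AE x in lebesgue. x \<notin> S"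
      using c by (rule eventually_mono) (metis top ennreal_less_top not_le)
    hence "AE x in lebesgue. x \<in> S \<longrightarrow> B + 1 \<le> fq x"
      by (rule eventually_mono) simp
    hence "B + 1 \<le> B" using H[of "B + 1"] B by linarith
    thus ?thesis by simp
  qed
qed

definition GG :: "real \<Rightarrow> real" where "GG r = FF r powr (1 - lam)"

lemma GG_mono: "0 < FF r \<Longrightarrow> FF r \<le> FF r' \<Longrightarrow> GG r' \<le> GG r"
  unfolding GG_def using lam1 by (intro powr_mono2') auto

lemma q_est:
  "\<exists>Cm>0. \<forall>r \<rho>. r > 0 \<longrightarrow> FF r > 0 \<longrightarrow> r \<le> \<rho> \<longrightarrow> \<rho> \<le> \<sigma> * r \<longrightarrow>
     essinf_on (ball 0 (\<sigma> * \<rho>) - ball 0 (\<rho> / \<sigma>)) fq \<le> ennreal (Cm * r powr (- gam) * (GG r - GG (\<sigma> * r)))"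
proof -
  obtain C1 C2 where C: "C1 > 0" "C2 > 0" and
    E: "\<And>r c. r > 0 \<Longrightarrow> c > 0 \<Longrightarrow> (AE x in lebesgue. x \<in> RR r \<longrightarrow> c \<le> a x powr (-lam) * b x) \<Longrightarrow>
     FF r \<le> C2 * (c * r powr gam) powr (-1/(lam-1)) \<and> FF r powr lam * (c * r powr gam) \<le> C1 * WW r"
    using estimates by blast
  define Cl where "Cl = max (1 / (1 - 2 powr (1 - lam))) (2 powr lam / (lam - 1))"
  define Cx where "Cx = max (C2 powr (lam - 1)) C1"
  have "Cl \<ge> 2 powr lam / (lam - 1)" by (simp add: Cl_def)
  moreover have "2 powr lam / (lam - 1) > 0" using lam1 by simp
  ultimately have Cl: "Cl > 0" by linarith
  have Cx: "Cx > 0" using C by (simp add: Cx_def max_def)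
  have main: "essinf_on (ball 0 (\<sigma> * \<rho>) - ball 0 (\<rho> / \<sigma>)) fq \<le> ennreal ((Cx * Cl) * r powr (- gam) * (GG r - GG (\<sigma> * r)))"
    if r: "r > 0" and F0: "FF r > 0" and \<rho>1: "r \<le> \<rho>" and \<rho>2: "\<rho> \<le> \<sigma> * r" for r \<rho>
  proof -
    define F1 where "F1 = FF (\<sigma> * r)"
    define t where "t = F1 / FF r"
    have FW: "FF r + WW r \<le> F1" using FF_WW[OF r] by (simp add: F1_def)
    have t1: "t \<ge> 1" using FW WW_nonneg[of r] F0 by (simp add: t_def field_simps)
    have F1t: "F1 = t * FF r" using F0 by (simp add: t_def)
    have Gdiff: "GG r - GG (\<sigma> * r) = GG r * (1 - t powr (1 - lam))"
      using F0 t1 by (simp add: GG_def F1_def[symmetric] F1t powr_mult algebra_simps)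
    have GGr: "GG r > 0" using F0 by (simp add: GG_def)
    have tp: "t powr (1 - lam) \<le> 1" using t1 lam1 powr_mono[of "1-lam" 0 t] by simp
    have ml: "min 1 (t - 1) \<le> Cl * (1 - t powr (1 - lam))" unfolding Cl_def by (rule min_lemma[OF lam1 t1])
    have sub: "RR r \<subseteq> ball 0 (\<sigma> * \<rho>) - ball 0 (\<rho> / \<sigma>)"
    proof
      fix x assume x: "x \<in> RR r"
      have s1: "sqrt \<sigma> > 1" using sig by simp
      have "sqrt \<sigma> * 1 < sqrt \<sigma> * sqrt \<sigma>" using s1 by (intro mult_strict_left_mono) auto
      hence ss: "sqrt \<sigma> < \<sigma>" using sig by simp
      have "norm x \<le> sqrt \<sigma> * r" using x by (simp add: RR_def)
      also have "\<dots> < \<sigma> * r" using ss r by simp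
      also have "\<dots> \<le> \<sigma> * \<rho>" using \<rho>1 sig by simp
      finally have a1: "norm x < \<sigma> * \<rho>" .
      have "\<rho> / \<sigma> \<le> r" using \<rho>2 sig by (simp add: divide_le_eq mult.commute)
      also have "r \<le> norm x" using x by (simp add: RR_def)
      finally show "x \<in> ball 0 (\<sigma> * \<rho>) - ball 0 (\<rho> / \<sigma>)" using a1 by simp
    qed
    show ?thesis
    proof (rule essinf_le)
      show "0 \<le> Cx * Cl * r powr - gam * (GG r - GG (\<sigma> * r))"
        unfolding Gdiff using Cx Cl GGr ml t1 tp by (intro mult_nonneg_nonneg) (auto simp: min_def split: if_splits)
      fix c' :: real assume c': "c' > 0" and ae: "AE x in lebesgue. x \<in> ball 0 (\<sigma> * \<rho>) - ball 0 (\<rho> / \<sigma>) \<longrightarrow> c' \<le> fq x"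
      have ae2: "AE x in lebesgue. x \<in> RR r \<longrightarrow> c' \<le> a x powr (-lam) * b x"
        using ae by (rule eventually_mono) (use sub in \<open>auto simp: fq_def\<close>)
      define P where "P = c' * r powr gam"
      have P: "P > 0" using c' r by (simp add: P_def)
      have E2: "FF r \<le> C2 * P powr (-1/(lam-1))" and E1: "FF r powr lam * P \<le> C1 * WW r"
        using E[OF r c' ae2] by (auto simp: P_def)
      have GGFF: "GG r * FF r powr (lam - 1) = 1"
      proof -
        have "GG r * FF r powr (lam - 1) = FF r powr ((1 - lam) + (lam - 1))"
          unfolding GG_def by (rule powr_add[symmetric])
        thus ?thesis using F0 by simp
      qed
      have P2: "P \<le> C2 powr (lam - 1) * GG r"
      proof -
        have "FF r powr (lam - 1) \<le> (C2 * P powr (-1/(lam-1))) powr (lam - 1)"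
          using E2 F0 lam1 by (intro powr_mono2) auto
        also have "\<dots> = C2 powr (lam - 1) * (P powr (-1/(lam-1))) powr (lam - 1)"
          using C P by (simp add: powr_mult)
        also have "(P powr (-1/(lam-1))) powr (lam - 1) = P powr (-1/(lam-1) * (lam - 1))"
          by (rule powr_powr)
        also have "-1/(lam-1) * (lam - 1) = -1" using lam1 by simp
        also have "P powr (-1) = inverse P" using P by (simp add: powr_minus)
        finally have h: "FF r powr (lam - 1) \<le> C2 powr (lam - 1) * inverse P" .
        have hm: "P * FF r powr (lam - 1) \<le> P * (C2 powr (lam - 1) * inverse P)"
          using h P by (intro mult_left_mono) auto
        have e: "P * (C2 powr (lam - 1) * inverse P) = C2 powr (lam - 1)" using P by (simp add: field_simps)
        have h2: "P * FF r powr (lam - 1) \<le> C2 powr (lam - 1)" using hm e by linarith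
        have "GG r * (P * FF r powr (lam - 1)) \<le> GG r * C2 powr (lam - 1)"
          using h2 GGr by (intro mult_left_mono) auto
        thus ?thesis using GGFF by (simp add: algebra_simps)
      qed
      have P1: "P \<le> C1 * (GG r * (t - 1))"
      proof -
        have "C1 * WW r \<le> C1 * (F1 - FF r)" using FW C by (intro mult_left_mono) auto
        hence "FF r powr lam * P \<le> C1 * (F1 - FF r)" using E1 by linarith
        moreover have "FF r powr lam = FF r * FF r powr (lam - 1)"
        proof -
          have "FF r powr lam = FF r powr (1 + (lam - 1))" by simp
          also have "\<dots> = FF r powr 1 * FF r powr (lam - 1)" by (rule powr_add)
          finally show ?thesis using F0 by simp
        qed
        moreover note GGFF
        moreover have "F1 - FF r = FF r * (t - 1)" using F1t by (simp add: algebra_simps)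
        ultimately have "FF r * FF r powr (lam - 1) * P \<le> C1 * (FF r * (t - 1))" by simp
        hence "FF r * (FF r powr (lam - 1) * P) \<le> FF r * (C1 * (t - 1))" by (simp add: algebra_simps)
        hence "FF r powr (lam - 1) * P \<le> C1 * (t - 1)" using F0 by (simp only: mult_le_cancel_left_pos)
        hence "GG r * (FF r powr (lam - 1) * P) \<le> GG r * (C1 * (t - 1))" using GGr by simp
        thus ?thesis using GGFF by (simp add: algebra_simps)
      qed
      have "P \<le> GG r * (Cx * min 1 (t - 1))"
      proof (cases "t - 1 \<le> 1")
        case True
        have "C1 * (GG r * (t - 1)) \<le> Cx * (GG r * (t - 1))"
          using GGr t1 by (intro mult_right_mono) (auto simp: Cx_def)
        moreover have "min 1 (t - 1) = t - 1" using True by simp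
        ultimately show ?thesis using P1 by (simp add: algebra_simps)
      next
        case False
        have "C2 powr (lam - 1) * GG r \<le> Cx * GG r"
          using GGr by (intro mult_right_mono) (auto simp: Cx_def)
        moreover have "min 1 (t - 1) = 1" using False by simp
        ultimately show ?thesis using P2 by (simp add: algebra_simps)
      qed
      also have "\<dots> \<le> GG r * (Cx * (Cl * (1 - t powr (1 - lam))))"
        using ml GGr Cx by (intro mult_left_mono) auto
      also have "\<dots> = Cx * Cl * (GG r - GG (\<sigma> * r))" unfolding Gdiff by (simp add: algebra_simps)
      finally have "c' * r powr gam \<le> Cx * Cl * (GG r - GG (\<sigma> * r))" by (simp add: P_def)
      hence "c' * r powr gam * r powr (- gam) \<le> Cx * Cl * (GG r - GG (\<sigma> * r)) * r powr (- gam)"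
        using r by (intro mult_right_mono) auto
      moreover have "r powr gam * r powr (- gam) = 1" using r by (simp add: powr_add[symmetric])
      ultimately show "c' \<le> Cx * Cl * r powr - gam * (GG r - GG (\<sigma> * r))" by (simp add: algebra_simps)
    qed
  qed
  show ?thesis using main Cx Cl by (intro exI[of _ "Cx * Cl"]) auto
qed

end


context sol begin

lemma fq_meas: "fq \<in> borel_measurable lebesgue"
  unfolding fq_def[abs_def] using am bm
  by (intro borel_measurable_times powr_real_measurable) auto

lemma q_bounded:
  assumes s: "s > 0"
  shows "\<exists>N\<ge>0. \<forall>\<rho>. s \<le> \<rho> \<and> \<rho> \<le> \<sigma> * s \<longrightarrow> essinf_on (ball 0 (\<sigma> * \<rho>) - ball 0 (\<rho> / \<sigma>)) fq \<le> ennreal N"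
proof -
  define i0 :: 'n where "i0 = undefined"
  define p :: "real^'n" where "p = (s * (1 + \<sigma>) / 2) *\<^sub>R axis i0 1"
  define e where "e = s * (\<sigma> - 1) / 2"
  have e: "e > 0" using s sig by (simp add: e_def)
  have np: "norm p = s * (1 + \<sigma>) / 2" using s sig by (simp add: p_def)
  have Bsub: "ball p e \<subseteq> {x. s < norm x \<and> norm x < \<sigma> * s}"
  proof
    fix x assume "x \<in> ball p e"
    hence d: "norm (x - p) < e" by (simp add: dist_norm norm_minus_commute)
    have "norm p \<le> norm x + norm (p - x)" by (rule norm_triangle_sub)
    hence "norm p \<le> norm x + norm (x - p)" by (simp add: norm_minus_commute)
    moreover have "norm x \<le> norm p + norm (x - p)" by (rule norm_triangle_sub)
    ultimately have "norm p - e < norm x" "norm x < norm p + e" using d by linarith+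
    moreover have "norm p - e = s" "norm p + e = \<sigma> * s" unfolding np e_def by (simp_all add: field_simps)
    ultimately show "x \<in> {x. s < norm x \<and> norm x < \<sigma> * s}" by simp
  qed
  have Bm: "measure lebesgue (ball p e) > 0"
  proof -
    have "measure lebesgue (ball p e) = measure lborel (ball p e)" by (simp add: measure_completion)
    also have "\<dots> = unit_ball_vol (real DIM(real^'n)) * e ^ DIM(real^'n)"
      using content_ball[of e p] e by simp
    finally show ?thesis using e by simp
  qed
  have Bnn: "ball p e \<notin> null_sets lebesgue"
  proof
    assume "ball p e \<in> null_sets lebesgue"
    hence "emeasure lebesgue (ball p e) = 0" by auto
    hence "measure lebesgue (ball p e) = 0" by (simp add: measure_def)
    thus False using Bm by simp
  qed
  define E where "E k = {x \<in> ball p e. fq x \<le> real k}" for k :: nat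
  have Em: "E k \<in> sets lebesgue" for k
  proof -
    have "E k = ball p e \<inter> {x. fq x \<le> real k}" by (auto simp: E_def)
    moreover have "{x. fq x \<le> real k} \<in> sets lebesgue"
      using fq_meas[unfolded borel_measurable_iff_le] by simp
    ultimately show ?thesis by (auto intro: sets.Int borel_open sets_completionI_sets)
  qed
  have "\<exists>k. E k \<notin> null_sets lebesgue"
  proof (rule ccontr)
    assume "\<nexists>k. E k \<notin> null_sets lebesgue"
    hence "(\<Union>k. E k) \<in> null_sets lebesgue" by (intro null_sets_UN) auto
    moreover have "(\<Union>k. E k) = ball p e"
    proof
      show "(\<Union>k. E k) \<subseteq> ball p e" by (auto simp: E_def)
      show "ball p e \<subseteq> (\<Union>k. E k)"
      proof
        fix x assume x: "x \<in> ball p e"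
        obtain k :: nat where "fq x \<le> real k" using real_arch_simple by blast
        thus "x \<in> (\<Union>k. E k)" using x by (auto simp: E_def)
      qed
    qed
    ultimately show False using Bnn by simp
  qed
  then obtain k where k: "E k \<notin> null_sets lebesgue" by blast
  show ?thesis
  proof (intro exI[of _ "real k"] conjI allI impI)
    fix \<rho> assume \<rho>: "s \<le> \<rho> \<and> \<rho> \<le> \<sigma> * s"
    have sub: "ball p e \<subseteq> ball 0 (\<sigma> * \<rho>) - ball 0 (\<rho> / \<sigma>)"
    proof
      fix x assume "x \<in> ball p e"
      hence x: "s < norm x" "norm x < \<sigma> * s" using Bsub by auto
      have "\<rho> / \<sigma> \<le> s" using \<rho> sig by (simp add: divide_le_eq mult.commute)
      moreover have "\<sigma> * s \<le> \<sigma> * \<rho>" using \<rho> sig by simp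
      ultimately show "x \<in> ball 0 (\<sigma> * \<rho>) - ball 0 (\<rho> / \<sigma>)" using x by auto
    qed
    show "essinf_on (ball 0 (\<sigma> * \<rho>) - ball 0 (\<rho> / \<sigma>)) fq \<le> ennreal (real k)"
    proof (rule essinf_le)
      fix c' :: real assume c': "c' > 0" and ae: "AE x in lebesgue. x \<in> ball 0 (\<sigma> * \<rho>) - ball 0 (\<rho> / \<sigma>) \<longrightarrow> c' \<le> fq x"
      show "c' \<le> real k"
      proof (rule ccontr)
        assume "\<not> c' \<le> real k"
        hence ck: "c' > real k" by simp
        have "AE x in lebesgue. x \<notin> E k"
          using ae by (rule eventually_mono) (use sub ck in \<open>auto simp: E_def\<close>)
        moreover have eqE: "{x \<in> space lebesgue. \<not> (x \<notin> E k)} = E k" by auto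
        ultimately have "emeasure lebesgue (E k) = 0"
          using AE_iff_measurable[OF Em eqE] by simp
        hence "E k \<in> null_sets lebesgue" using Em by auto
        thus False using k by simp
      qed
    qed simp
  qed simp
qed

end


context sol begin

definition QQ :: "real \<Rightarrow> ennreal" where
  "QQ \<rho> = essinf_on (ball 0 (\<sigma> * \<rho>) - ball 0 (\<rho> / \<sigma>)) fq"

lemma pw_bound:
  assumes r: "r > 0" and "r \<le> \<rho>" "\<rho> \<le> \<sigma> * r"
  shows "\<rho> powr (gam - 1) \<le> max 1 (\<sigma> powr (gam - 1)) * r powr (gam - 1)"
proof (cases "gam - 1 \<ge> 0")
  case True
  have "\<rho> powr (gam - 1) \<le> (\<sigma> * r) powr (gam - 1)"
    using assms True by (intro powr_mono2) auto
  also have "\<dots> = \<sigma> powr (gam - 1) * r powr (gam - 1)" using r sig by (simp add: powr_mult)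
  also have "\<dots> \<le> max 1 (\<sigma> powr (gam - 1)) * r powr (gam - 1)" by (intro mult_right_mono) auto
  finally show ?thesis .
next
  case False
  have "\<rho> powr (gam - 1) \<le> r powr (gam - 1)"
    using assms False by (intro powr_mono2') auto
  also have "\<dots> \<le> max 1 (\<sigma> powr (gam - 1)) * r powr (gam - 1)"
    using mult_right_mono[of 1 "max 1 (\<sigma> powr (gam - 1))" "r powr (gam - 1)"] by simp
  finally show ?thesis .
qed

lemma interval_ex:
  assumes "\<rho> \<ge> 1" shows "\<exists>k. \<sigma> ^ k \<le> \<rho> \<and> \<rho> < \<sigma> ^ Suc k"
proof -
  obtain n where n: "\<rho> < \<sigma> ^ n" using real_arch_pow[OF sig] by blast
  define n0 where "n0 = (LEAST n. \<rho> < \<sigma> ^ n)"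
  have n0: "\<rho> < \<sigma> ^ n0" unfolding n0_def by (rule LeastI[of _ n]) (rule n)
  have "n0 \<noteq> 0" using n0 assms by (intro notI) simp
  then obtain k where k: "n0 = Suc k" by (cases n0) auto
  have "\<not> \<rho> < \<sigma> ^ k"
  proof
    assume "\<rho> < \<sigma> ^ k"
    hence "n0 \<le> k" unfolding n0_def by (rule Least_le)
    thus False using k by simp
  qed
  thus ?thesis using n0 k by (intro exI[of _ k]) (simp add: not_less)
qed

lemma FF_zero_imp:
  assumes "\<And>r. r > 0 \<Longrightarrow> FF r = 0"
  shows "AE x in lebesgue. u x = 0"
proof -
  have h: "AE x in lebesgue. indicator (ball 0 (real (Suc n))) x * ff x = 0" for n :: nat
  proof -
    have "FF (real (Suc n)) = 0" using assms by simp
    thus ?thesis unfolding FF_def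
      using integral_nonneg_eq_0_iff_AE[OF FF_int, of "real (Suc n)"] ff_nonneg by auto
  qed
  have "AE x in lebesgue. \<forall>n::nat. indicator (ball 0 (real (Suc n))) x * ff x = 0"
    unfolding AE_all_countable using h by blast
  thus ?thesis
  proof (rule eventually_mono)
    fix x :: "real^'n"
    assume H: "\<forall>n::nat. indicator (ball 0 (real (Suc n))) x * ff x = 0"
    obtain n :: nat where "norm x \<le> real n" using real_arch_simple by blast
    hence "x \<in> ball 0 (real (Suc n))" by simp
    hence "ff x = 0" using H[rule_format, of n] by simp
    hence "\<bar>u x\<bar> powr lam = 0" using bpos[of x] by (simp add: ff_def)
    thus "u x = 0" by simp
  qed
qed

lemma main_fin:
  assumes r0: "r0 > 0" and F0: "FF r0 > 0"
  shows "(\<integral>\<^sup>+ \<rho>. indicator {1..} \<rho> * ennreal (\<rho> powr (gam - 1)) * QQ \<rho> \<partial>lborel) < \<infinity>"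
proof -
  obtain Cm where Cm: "Cm > 0" and qe: "\<And>r \<rho>. r > 0 \<Longrightarrow> FF r > 0 \<Longrightarrow> r \<le> \<rho> \<Longrightarrow> \<rho> \<le> \<sigma> * r \<Longrightarrow>
     QQ \<rho> \<le> ennreal (Cm * r powr (- gam) * (GG r - GG (\<sigma> * r)))"
    using q_est unfolding QQ_def by blast
  obtain K0 where K0: "r0 < \<sigma> ^ K0" using real_arch_pow[OF sig] by blast
  have spos: "\<sigma> ^ k > 0" for k using sig by simp
  have FFpos: "FF (\<sigma> ^ k) > 0" if "k \<ge> K0" for k
  proof -
    have "\<sigma> ^ K0 \<le> \<sigma> ^ k" using that sig by (intro power_increasing) auto
    hence "FF r0 \<le> FF (\<sigma> ^ k)" using K0 by (intro FF_mono) auto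
    thus ?thesis using F0 by simp
  qed
  define g where "g k = GG (\<sigma> ^ max k K0)" for k
  have g_dec: "g (Suc k) \<le> g k" for k
  proof -
    have "\<sigma> ^ max k K0 \<le> \<sigma> ^ max (Suc k) K0" using sig by (intro power_increasing) auto
    thus ?thesis unfolding g_def using FFpos[of "max k K0"] by (intro GG_mono FF_mono) auto
  qed
  have g_nn: "g k \<ge> 0" for k by (simp add: g_def GG_def)
  define Cg where "Cg = max 1 (\<sigma> powr (gam - 1))"
  have "Cg \<ge> 1" by (simp add: Cg_def)
  hence Cg: "Cg > 0" by linarith
  define N where "N k = (SOME N. N \<ge> 0 \<and> (\<forall>\<rho>. \<sigma> ^ k \<le> \<rho> \<and> \<rho> \<le> \<sigma> * \<sigma> ^ k \<longrightarrow> QQ \<rho> \<le> ennreal N))" for k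
  have N: "N k \<ge> 0 \<and> (\<forall>\<rho>. \<sigma> ^ k \<le> \<rho> \<and> \<rho> \<le> \<sigma> * \<sigma> ^ k \<longrightarrow> QQ \<rho> \<le> ennreal (N k))" for k
    unfolding N_def QQ_def by (rule someI_ex) (rule q_bounded[OF spos])
  define \<beta> where "\<beta> k = (if k < K0 then Cg * (\<sigma> ^ k) powr (gam - 1) * N k
      else Cg * (\<sigma> ^ k) powr (gam - 1) * (Cm * (\<sigma> ^ k) powr (- gam) * (g k - g (Suc k))))" for k
  have \<beta>_nn: "\<beta> k \<ge> 0" for k
    using N[of k] Cg Cm g_dec[of k] by (simp add: \<beta>_def)
  have A: "ennreal (\<rho> powr (gam - 1)) * QQ \<rho> \<le> ennreal (\<beta> k)"
    if \<rho>: "\<sigma> ^ k \<le> \<rho>" "\<rho> < \<sigma> ^ Suc k" for k \<rho>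
  proof -
    define rk where "rk = \<sigma> ^ k"
    have rk: "rk > 0" using spos by (simp add: rk_def)
    have \<rho>': "rk \<le> \<rho>" "\<rho> \<le> \<sigma> * rk" using \<rho> by (auto simp: rk_def)
    have pw: "ennreal (\<rho> powr (gam - 1)) \<le> ennreal (Cg * rk powr (gam - 1))"
      using pw_bound[OF rk \<rho>'] by (simp add: Cg_def ennreal_leI)
    show ?thesis
    proof (cases "k < K0")
      case True
      have "QQ \<rho> \<le> ennreal (N k)" using N[of k] \<rho>' by (auto simp: rk_def)
      hence "ennreal (\<rho> powr (gam - 1)) * QQ \<rho> \<le> ennreal (Cg * rk powr (gam - 1)) * ennreal (N k)"
        using pw by (intro mult_mono) auto
      also have "\<dots> = ennreal (\<beta> k)" using True N[of k] Cg
        by (simp add: \<beta>_def rk_def ennreal_mult[symmetric])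
      finally show ?thesis .
    next
      case False
      have "QQ \<rho> \<le> ennreal (Cm * rk powr (- gam) * (GG rk - GG (\<sigma> * rk)))"
        using qe[OF rk _ \<rho>'] FFpos[of k] False by (simp add: rk_def)
      also have "GG rk - GG (\<sigma> * rk) = g k - g (Suc k)"
        using False by (simp add: g_def rk_def max_def)
      finally have "ennreal (\<rho> powr (gam - 1)) * QQ \<rho> \<le>
          ennreal (Cg * rk powr (gam - 1)) * ennreal (Cm * rk powr (- gam) * (g k - g (Suc k)))"
        using pw by (intro mult_mono) auto
      also have "\<dots> = ennreal (\<beta> k)" using False Cg
        ennreal_mult'[of "Cg * (\<sigma> ^ k) powr (gam - 1)" "Cm * (\<sigma> ^ k) powr (- gam) * (g k - g (Suc k))"]
        by (simp add: \<beta>_def rk_def)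
      finally show ?thesis .
    qed
  qed
  have B: "indicator {1..} \<rho> * ennreal (\<rho> powr (gam - 1)) * QQ \<rho> \<le>
      (\<Sum>k. ennreal (\<beta> k) * indicator {\<sigma> ^ k..<\<sigma> ^ Suc k} \<rho>)" for \<rho>
  proof (cases "\<rho> \<ge> 1")
    case True
    then obtain k where k: "\<sigma> ^ k \<le> \<rho>" "\<rho> < \<sigma> ^ Suc k" using interval_ex by blast
    have "indicator {1..} \<rho> * ennreal (\<rho> powr (gam - 1)) * QQ \<rho> = ennreal (\<rho> powr (gam - 1)) * QQ \<rho>"
      using True by simp
    also have "\<dots> \<le> ennreal (\<beta> k) * indicator {\<sigma> ^ k..<\<sigma> ^ Suc k} \<rho>" using A[OF k] k by simp
    also have "\<dots> \<le> (\<Sum>j<Suc k. ennreal (\<beta> j) * indicator {\<sigma> ^ j..<\<sigma> ^ Suc j} \<rho>)" by simp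
    also have "\<dots> \<le> (\<Sum>j. ennreal (\<beta> j) * indicator {\<sigma> ^ j..<\<sigma> ^ Suc j} \<rho>)"
      by (rule sum_le_suminf) auto
    finally show ?thesis .
  qed simp
  have C: "(\<integral>\<^sup>+ \<rho>. (\<Sum>k. ennreal (\<beta> k) * indicator {\<sigma> ^ k..<\<sigma> ^ Suc k} \<rho>) \<partial>lborel)
      = (\<Sum>k. ennreal (\<beta> k * (\<sigma> ^ Suc k - \<sigma> ^ k)))"
  proof -
    have "(\<integral>\<^sup>+ \<rho>. (\<Sum>k. ennreal (\<beta> k) * indicator {\<sigma> ^ k..<\<sigma> ^ Suc k} \<rho>) \<partial>lborel)
        = (\<Sum>k. \<integral>\<^sup>+ \<rho>. ennreal (\<beta> k) * indicator {\<sigma> ^ k..<\<sigma> ^ Suc k} \<rho> \<partial>lborel)"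
      by (rule nn_integral_suminf) auto
    also have "\<dots> = (\<Sum>k. ennreal (\<beta> k * (\<sigma> ^ Suc k - \<sigma> ^ k)))"
    proof (intro suminf_cong)
      fix k
      have le: "\<sigma> ^ k \<le> \<sigma> ^ Suc k" using sig by (intro power_increasing) auto
      show "(\<integral>\<^sup>+ \<rho>. ennreal (\<beta> k) * indicator {\<sigma> ^ k..<\<sigma> ^ Suc k} \<rho> \<partial>lborel) = ennreal (\<beta> k * (\<sigma> ^ Suc k - \<sigma> ^ k))"
        using le \<beta>_nn[of k] by (simp add: nn_integral_cmult_indicator ennreal_mult[symmetric])
    qed
    finally show ?thesis .
  qed
  define D0 where "D0 = Cg * Cm * (\<sigma> - 1)"
  define X where "X k = (if k < K0 then \<beta> k * (\<sigma> ^ Suc k - \<sigma> ^ k) else 0)" for k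
  have trm: "\<beta> k * (\<sigma> ^ Suc k - \<sigma> ^ k) = X k + D0 * (g k - g (Suc k))" for k
  proof (cases "k < K0")
    case True
    have "g k = g (Suc k)" using True by (simp add: g_def max_def)
    thus ?thesis using True by (simp add: X_def)
  next
    case False
    define rk where "rk = \<sigma> ^ k"
    have rk: "rk > 0" using spos by (simp add: rk_def)
    have e: "rk powr (gam - 1) * rk powr (- gam) * rk = 1"
    proof -
      have "rk powr ((gam - 1) + (- gam) + 1) = rk powr (gam - 1) * rk powr (- gam) * rk powr 1"
        by (simp only: powr_add)
      moreover have "(gam - 1) + (- gam) + 1 = 0" by simp
      ultimately show ?thesis using rk by simp
    qed
    have "\<beta> k * (\<sigma> ^ Suc k - \<sigma> ^ k) = Cg * Cm * (\<sigma> - 1) * (g k - g (Suc k)) * (rk powr (gam - 1) * rk powr (- gam) * rk)"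
      using False by (simp add: \<beta>_def rk_def algebra_simps)
    thus ?thesis using False e by (simp add: X_def D0_def)
  qed
  obtain L where L: "g \<longlonglongrightarrow> L"
    using decseq_convergent[of g 0] g_dec g_nn by (metis decseq_Suc_iff)
  have sX: "summable X"
    by (rule summable_finite[of "{..<K0}"]) (auto simp: X_def)
  have sT: "summable (\<lambda>k. D0 * (g k - g (Suc k)))"
    by (intro summable_mult telescope_summable'[OF L])
  have sum: "summable (\<lambda>k. \<beta> k * (\<sigma> ^ Suc k - \<sigma> ^ k))"
    unfolding trm by (rule summable_add[OF sX sT])
  have nn: "\<beta> k * (\<sigma> ^ Suc k - \<sigma> ^ k) \<ge> 0" for k
    using \<beta>_nn[of k] sig by (intro mult_nonneg_nonneg) (auto intro: power_increasing)
  have "(\<Sum>k. ennreal (\<beta> k * (\<sigma> ^ Suc k - \<sigma> ^ k))) \<noteq> top"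
    by (rule ennreal_suminf_neq_top[OF sum nn])
  hence fin: "(\<Sum>k. ennreal (\<beta> k * (\<sigma> ^ Suc k - \<sigma> ^ k))) < \<infinity>" by (simp add: top.not_eq_extremum)
  have "(\<integral>\<^sup>+ \<rho>. indicator {1..} \<rho> * ennreal (\<rho> powr (gam - 1)) * QQ \<rho> \<partial>lborel)
      \<le> (\<integral>\<^sup>+ \<rho>. (\<Sum>k. ennreal (\<beta> k) * indicator {\<sigma> ^ k..<\<sigma> ^ Suc k} \<rho>) \<partial>lborel)"
    by (intro nn_integral_mono B)
  also have "\<dots> < \<infinity>" using C fin by simp
  finally show ?thesis .
qed

end


theorem theorem2p1:
  fixes m :: nat and lam :: real and \<sigma> :: real
    and A :: "'n::finite multiset \<Rightarrow> real^'n \<Rightarrow> real \<Rightarrow> real"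
    and a b u :: "real^'n \<Rightarrow> real"
  assumes "m \<ge> 1" and "lam > 1"
    and "b \<in> borel_measurable lebesgue" and "\<And>x. b x > 0"
    and "a \<in> borel_measurable lebesgue" and "\<And>x. a x > 0"
    and "AE x in lebesgue. \<forall>\<zeta> \<alpha>. size \<alpha> = m \<longrightarrow> \<bar>A \<alpha> x \<zeta>\<bar> \<le> a x * \<bar>\<zeta>\<bar>"
    and "\<sigma> > 1"
    and "(\<integral>\<^sup>+ r. indicator {1..} r * ennreal (r powr ((real m - real CARD('n)) * lam + real CARD('n) - 1))
            * essinf_on (ball 0 (\<sigma> * r) - ball 0 (r / \<sigma>)) (\<lambda>x. a x powr (- lam) * b x) \<partial>lborel) = \<infinity>"
    and "is_solution m lam A b u"
  shows "AE x in lebesgue. u x = 0"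
proof -
  interpret sol m lam \<sigma> A a b u
    using assms(1-8,10) by unfold_locales auto
  show ?thesis
  proof (cases "\<forall>r>0. FF r = 0")
    case True thus ?thesis by (intro FF_zero_imp) auto
  next
    case False
    then obtain r0 where r0: "r0 > 0" "FF r0 \<noteq> 0" by blast
    hence F0: "FF r0 > 0" using FF_nonneg[of r0] by linarith
    have fin: "(\<integral>\<^sup>+ \<rho>. indicator {1..} \<rho> * ennreal (\<rho> powr (gam - 1)) * QQ \<rho> \<partial>lborel) < \<infinity>"
      by (rule main_fin[OF r0(1) F0])
    have fqe: "(\<lambda>x. a x powr (- lam) * b x) = fq" by (simp add: fq_def fun_eq_iff)
    have ge: "(real m - real CARD('n)) * lam + real CARD('n) - 1 = gam - 1" by (simp add: gam_def)
    have "(\<integral>\<^sup>+ \<rho>. indicator {1..} \<rho> * ennreal (\<rho> powr (gam - 1)) * QQ \<rho> \<partial>lborel) = \<infinity>"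
      using assms(9) unfolding fqe ge QQ_def by simp
    thus ?thesis using fin by simp
  qed
qed


end
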